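(* Let $T>0$, $0<\epsilon$, $G(x)=\sqrt{x^2+\epsilon^2}$, and let $\hat\rho$ and $\hat g=-\hat\rho_t\hat\rho_x$ be as in the context. Then $G(\hat\rho_x)$ is an entropy sub-solution of $$w_t+(\hat g\,f_\epsilon(w))_x=0\ \text{in }Q_T,\qquad w(\cdot,0)=G(\hat\rho_x(\cdot,0))\ \text{in }\mathbb{R}.$$
   Context: $Q_T=\mathbb{R}\times(0,T)$, $I=(0,1)$. Let $\rho^0\in C_0^\infty(I)$ and $\rho$ the solution of $\rho_t=\rho_{xx}$ in $I\times(0,\infty)$, $\rho(\cdot,0)=\rho^0$, $\rho(0,t)=\rho(1,t)=0$. Define $\hat\rho$ on $[0,2]\times[0,T]$ by $\hat\rho=\rho$ on $[0,1]\times[0,T]$ and $\hat\rho(x,t)=-\rho(2-x,t)$ for $x\in(1,2]$, and extend it to $\mathbb{R}\times[0,T]$ by $2$-periodicity in $x$. For $a>0$, $f_a(x)=1/x$ if $x\ge a$ and $f_a(x)=\frac{2a-x}{a^2+a^2(x-a)^2}$ if $x<a$. Entropy sub-solution of $v_t+(g f(v))_x=0$, $v(\cdot,0)=v^0\in L^\infty$ (with $g,g_x\in L^\infty_{loc}$, $f\in C^1$): $v\in L^\infty(Q_T)$ such that for every $\phi\in C_0^1(\mathbb{R}\times[0,T);[0,\infty))$, every non-decreasing convex $\eta\in C^1$, $\Phi\in C^1$ with $\Phi'=f'\eta'$, $h=\Phi-f\eta'$: $\int_{Q_T}[\eta(v)\phi_t+\Phi(v)g\phi_x+h(v)g_x\phi]\,dx\,dt+\int_{\mathbb{R}}\eta(v^0)\phi(x,0)\,dx\ge0$.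 *)

theory Defs
  imports "HOL-Analysis.Analysis"
begin

definition QT :: "real \<Rightarrow> (real \<times> real) set" where
  "QT T = UNIV \<times> {0<..<T}"

definition f_a :: "real \<Rightarrow> real \<Rightarrow> real" where
  "f_a a x = (if x \<ge> a then 1 / x else (2*a - x) / (a^2 + a^2 * (x - a)^2))"

definition G_eps :: "real \<Rightarrow> real \<Rightarrow> real" where
  "G_eps \<epsilon> x = sqrt (x^2 + \<epsilon>^2)"

text \<open>Odd reflection across x = 1 and 2-periodic extension in x.\<close>
definition rho_hat :: "(real \<Rightarrow> real \<Rightarrow> real) \<Rightarrow> real \<Rightarrow> real \<Rightarrow> real" where
  "rho_hat \<rho> x t = (let y = x - 2 * of_int \<lfloor>x / 2\<rfloor> in
      if y \<le> 1 then \<rho> y t else - \<rho> (2 - y) t)"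

definition rho_hat_x :: "(real \<Rightarrow> real \<Rightarrow> real) \<Rightarrow> real \<Rightarrow> real \<Rightarrow> real" where
  "rho_hat_x \<rho> x t = deriv (\<lambda>y. rho_hat \<rho> y t) x"

definition rho_hat_t :: "(real \<Rightarrow> real \<Rightarrow> real) \<Rightarrow> real \<Rightarrow> real \<Rightarrow> real" where
  "rho_hat_t \<rho> x t = deriv (\<lambda>s. rho_hat \<rho> x s) t"

definition g_hat :: "(real \<Rightarrow> real \<Rightarrow> real) \<Rightarrow> real \<times> real \<Rightarrow> real" where
  "g_hat \<rho> z = - rho_hat_t \<rho> (fst z) (snd z) * rho_hat_x \<rho> (fst z) (snd z)"

text \<open>Nonnegative C^1 test functions with compact support in R x [0,T)
  (represented by C^1 functions on R^2 with compact support in R x (-inf,T),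
  nonnegative for t >= 0); phx, pht are the partial derivatives.\<close>
definition test_fun ::
  "real \<Rightarrow> (real \<times> real \<Rightarrow> real) \<Rightarrow> (real \<times> real \<Rightarrow> real) \<Rightarrow> (real \<times> real \<Rightarrow> real) \<Rightarrow> bool" where
  "test_fun T \<phi> \<phi>x \<phi>t \<longleftrightarrow>
     (\<forall>z. (\<phi> has_derivative (\<lambda>(h,k). \<phi>x z * h + \<phi>t z * k)) (at z)) \<and>
     continuous_on UNIV \<phi>x \<and> continuous_on UNIV \<phi>t \<and>
     (\<forall>x t. t \<ge> 0 \<longrightarrow> \<phi> (x,t) \<ge> 0) \<and>
     (\<exists>K. compact K \<and> K \<subseteq> {z. snd z < T} \<and> (\<forall>z. z \<notin> K \<longrightarrow> \<phi> z = 0))"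

definition entropy_subsol ::
  "real \<Rightarrow> (real \<times> real \<Rightarrow> real) \<Rightarrow> (real \<Rightarrow> real) \<Rightarrow> (real \<times> real \<Rightarrow> real) \<Rightarrow> (real \<Rightarrow> real) \<Rightarrow> bool" where
  "entropy_subsol T g f v v0 \<longleftrightarrow>
     set_borel_measurable lborel (QT T) v \<and>
     (\<exists>C. AE z in lborel. z \<in> QT T \<longrightarrow> \<bar>v z\<bar> \<le> C) \<and>
     (\<forall>\<phi> \<phi>x \<phi>t \<eta> \<eta>' \<Phi>.
        test_fun T \<phi> \<phi>x \<phi>t \<and>
        (\<forall>u. (\<eta> has_real_derivative \<eta>' u) (at u)) \<and> continuous_on UNIV \<eta>' \<and>
        mono \<eta> \<and> convex_on UNIV \<eta> \<and>
        (\<forall>u. (\<Phi> has_real_derivative (deriv f u * \<eta>' u)) (at u))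
        \<longrightarrow>
        (let h = (\<lambda>u. \<Phi> u - f u * \<eta>' u);
             gx = (\<lambda>z. deriv (\<lambda>y. g (y, snd z)) (fst z));
             F = (\<lambda>z. \<eta> (v z) * \<phi>t z + \<Phi> (v z) * g z * \<phi>x z + h (v z) * gx z * \<phi> z);
             F0 = (\<lambda>x. \<eta> (v0 x) * \<phi> (x, 0))
         in set_integrable lborel (QT T) F \<and> integrable lborel F0 \<and>
            (LINT z:QT T|lborel. F z) + (LINT x|lborel. F0 x) \<ge> 0))"

end

theory Submission
  imports Defs "HOL-Probability.Probability"
begin

locale hd =
  fixes r0 :: "real \<Rightarrow> real" and a b :: real
  assumes smooth: "\<forall>n x. (deriv ^^ n) r0 differentiable (at x)"
  and a_pos: "0 < a" and ab: "a \<le> b" and b1: "b < 1"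
  and supp: "\<forall>x. x < a \<or> b < x \<longrightarrow> r0 x = 0"
begin

definition D :: "nat \<Rightarrow> real \<Rightarrow> real" where "D n = (deriv ^^ n) r0"
definition Q :: "nat \<Rightarrow> real \<Rightarrow> real" where "Q n y = D n y - (-1)^n * D n (-y)"
definition kf :: "real \<Rightarrow> int" where "kf x = \<lfloor>(x+1)/2\<rfloor>"
definition H :: "nat \<Rightarrow> real \<Rightarrow> real" where "H n x = Q n (x - 2 * of_int (kf x))"

lemma D_deriv: "(D n has_real_derivative D (Suc n) x) (at x)"
proof -
  have "(deriv ^^ n) r0 differentiable (at x)" using smooth by blast
  then have "((deriv ^^ n) r0 has_real_derivative deriv ((deriv ^^ n) r0) x) (at x)"
    using DERIV_deriv_iff_real_differentiable by blast
  then show ?thesis unfolding D_def by simp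
qed

lemma D_zero: "x < a \<or> b < x \<Longrightarrow> D n x = 0"
proof (induction n arbitrary: x)
  case 0 then show ?case using supp by (auto simp add: D_def)
next
  case (Suc n)
  let ?S = "{..<a} \<union> {b<..}"
  have op: "open ?S" by auto
  have xs: "x \<in> ?S" using Suc.prems by auto
  have "((\<lambda>_. 0) has_real_derivative 0) (at x)" by simp
  then have "(D n has_real_derivative 0) (at x)"
    by (rule has_field_derivative_transform_within_open[OF _ op xs]) (use Suc.IH in auto)
  then show ?case using D_deriv DERIV_unique by blast
qed

lemma Q_deriv: "(Q n has_real_derivative Q (Suc n) y) (at y)"
proof -
  have d2: "((\<lambda>y. D n (-y)) has_real_derivative D (Suc n) (-y) * -1) (at y)"
    by (rule DERIV_chain2[where f="D n" and g="\<lambda>y. -y", OF D_deriv]) (auto intro: derivative_eq_intros)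
  have "(Q n has_real_derivative D (Suc n) y - (-1)^n * (D (Suc n) (-y) * -1)) (at y)"
    unfolding Q_def[abs_def] by (intro DERIV_diff DERIV_cmult D_deriv d2)
  then show ?thesis by (simp add: Q_def)
qed

lemma Q_cont: "continuous_on S (Q n)"
  using Q_deriv by (meson DERIV_continuous continuous_at_imp_continuous_on)

lemma Q_zero: "\<bar>y\<bar> > b \<Longrightarrow> Q n y = 0"
  unfolding Q_def using D_zero a_pos ab by (cases "y > 0") auto

lemma key_arith:
  fixes y z :: real and m :: int
  assumes "y - z = 2 * of_int m" "\<bar>y\<bar> \<le> 1" "\<bar>z\<bar> < 2 - b"
  shows "y = z \<or> (\<bar>y\<bar> > b \<and> \<bar>z\<bar> > b)"
proof (cases "m = 0")
  case True then show ?thesis using assms by simp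
next
  case False
  then have "m \<ge> 1 \<or> m \<le> -1" by linarith
  then have "of_int m \<ge> (1::real) \<or> of_int m \<le> (-1::real)" by (metis of_int_le_iff of_int_1 of_int_minus)
  then show ?thesis
  proof
    assume "of_int m \<ge> (1::real)"
    then have "y \<ge> z + 2" using assms(1) by linarith
    then show ?thesis using assms(2,3) b1 by (auto simp: abs_le_iff abs_less_iff)
  next
    assume "of_int m \<le> (-1::real)"
    then have "y \<le> z - 2" using assms(1) by linarith
    then show ?thesis using assms(2,3) b1 by (auto simp: abs_le_iff abs_less_iff)
  qed
qed

lemma kf_bounds: "-1 \<le> x - 2 * of_int (kf x) \<and> x - 2 * of_int (kf x) < 1"
proof -
  have "of_int \<lfloor>(x+1)/2\<rfloor> \<le> (x+1)/2" "(x+1)/2 < of_int \<lfloor>(x+1)/2\<rfloor> + 1" by linarith+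
  then have "2 * of_int \<lfloor>(x+1)/2\<rfloor> \<le> x+1" "x + 1 < 2 * of_int \<lfloor>(x+1)/2\<rfloor> + 2" by (simp_all add: field_simps)
  then show ?thesis unfolding kf_def by linarith
qed

lemma H_gen: assumes "\<bar>x - 2 * of_int k\<bar> < 2 - b"
  shows "H n x = Q n (x - 2 * of_int k)"
proof -
  have "x - 2 * of_int (kf x) = (x - 2 * of_int k) \<or>
     (\<bar>x - 2 * of_int (kf x)\<bar> > b \<and> \<bar>x - 2 * of_int k\<bar> > b)"
    by (rule key_arith[where m = "k - kf x"]) (use kf_bounds[of x] assms in auto)
  then show ?thesis unfolding H_def using Q_zero by metis
qed

lemma H_deriv: "(H n has_real_derivative H (Suc n) x0) (at x0)"
proof -
  define k0 where "k0 = kf x0"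
  define \<delta> where "\<delta> = 1-b"
  have dpos: "\<delta> > 0" using b1 by (simp add: \<delta>_def)
  have loc: "H m x = Q m (x - 2 * of_int k0)" if "x \<in> ball x0 \<delta>" for m x
  proof (rule H_gen)
    show "\<bar>x - 2 * of_int k0\<bar> < 2 - b"
      using that kf_bounds[of x0] unfolding k0_def \<delta>_def by (auto simp: dist_real_def abs_le_iff abs_less_iff)
  qed
  have "((\<lambda>x. Q n (x - 2 * of_int k0)) has_real_derivative Q (Suc n) (x0 - 2 * of_int k0)) (at x0)"
    by (rule DERIV_chain2[where f="Q n" and g="\<lambda>x. x - 2 * of_int k0", OF Q_deriv, of 1, simplified])
       (auto intro!: derivative_eq_intros)
  then have "(H n has_real_derivative Q (Suc n) (x0 - 2 * of_int k0)) (at x0)"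
    by (rule has_field_derivative_transform_within_open[of _ _ _ "ball x0 \<delta>"]) (use dpos loc in auto)
  moreover have "Q (Suc n) (x0 - 2 * of_int k0) = H (Suc n) x0" using loc[of x0] dpos by simp
  ultimately show ?thesis by simp
qed

lemma H_cont: "continuous_on S (H n)"
  using H_deriv by (meson DERIV_continuous continuous_at_imp_continuous_on)

lemma H_bound: "\<exists>B. \<forall>x. \<bar>H n x\<bar> \<le> B"
proof -
  have "compact (Q n ` {-1..1})" by (intro compact_continuous_image Q_cont) auto
  then obtain B where B: "\<forall>y\<in>Q n ` {-1..1}. norm y \<le> B"
    using compact_imp_bounded bounded_iff by metis
  show ?thesis
  proof (intro exI allI)
    fix x
    have "x - 2 * of_int (kf x) \<in> {-1..1}" using kf_bounds[of x] by auto
    then show "\<bar>H n x\<bar> \<le> B" using B unfolding H_def by auto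
  qed
qed

lemma H_periodic: "H n (x + 2 * of_int m) = H n x"
proof -
  have "H n (x + 2 * of_int m) = Q n (x + 2 * of_int m - 2 * of_int (kf x + m))"
    by (rule H_gen) (use kf_bounds[of x] b1 in \<open>auto simp: abs_le_iff\<close>)
  also have "\<dots> = H n x" unfolding H_def by simp
  finally show ?thesis .
qed

lemma Q0_odd: "Q 0 (-y) = - Q 0 y" unfolding Q_def by simp

lemma H0_odd: "H 0 (-x) = - H 0 x"
proof -
  have "H 0 (-x) = Q 0 (-x - 2 * of_int (- kf x))"
    by (rule H_gen) (use kf_bounds[of x] b1 in \<open>auto simp: abs_le_iff\<close>)
  also have "\<dots> = - Q 0 (x - 2 * of_int (kf x))" using Q0_odd[of "x - 2 * of_int (kf x)"] by simp
  finally show ?thesis unfolding H_def by simp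
qed

lemma H0_r0: "x \<in> {0..1} \<Longrightarrow> H 0 x = r0 x"
proof -
  assume x: "x \<in> {0..1}"
  have "H 0 x = Q 0 (x - 2 * of_int 0)" by (rule H_gen) (use x b1 in auto)
  also have "\<dots> = r0 x - r0 (-x)" by (simp add: Q_def D_def)
  also have "r0 (-x) = 0" using supp x a_pos by (cases "x = 0") auto
  finally show ?thesis by simp
qed

end

lemma lip1:
  fixes f f' :: "real \<Rightarrow> real"
  assumes d: "\<And>x. (f has_real_derivative f' x) (at x)" and M: "\<And>x. \<bar>f' x\<bar> \<le> M"
  shows "\<bar>f y - f x\<bar> \<le> M * \<bar>y - x\<bar>"
proof -
  have *: "\<bar>f v - f u\<bar> \<le> M * \<bar>v - u\<bar>" if uv: "u < v" for u v
  proof -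
    obtain z where "f v - f u = (v - u) * f' z" using MVT2[OF uv, of f f'] d by blast
    then have "\<bar>f v - f u\<bar> = \<bar>v - u\<bar> * \<bar>f' z\<bar>" by (simp add: abs_mult)
    also have "\<dots> \<le> \<bar>v - u\<bar> * M" using M by (intro mult_left_mono) auto
    finally show ?thesis by (simp add: mult.commute)
  qed
  consider "x < y" | "y < x" | "x = y" by linarith
  then show ?thesis
  proof cases
    case 2 then show ?thesis using *[of y x] by (simp add: abs_minus_commute)
  qed (use * in auto)
qed

lemma taylor2:
  fixes f f1 f2 :: "real \<Rightarrow> real"
  assumes d1: "\<And>x. (f has_real_derivative f1 x) (at x)"
    and d2: "\<And>x. (f1 has_real_derivative f2 x) (at x)" and M: "\<And>x. \<bar>f2 x\<bar> \<le> M"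
  shows "\<bar>f (y + d) - f y - d * f1 y\<bar> \<le> M * d^2"
proof -
  define g where "g v = f v - v * f1 y" for v
  have dg: "(g has_real_derivative f1 v - f1 y) (at v)" for v
    unfolding g_def[abs_def] by (rule derivative_eq_intros d1 refl)+ simp
  have lip: "\<bar>f1 v - f1 y\<bar> \<le> M * \<bar>v - y\<bar>" for v using lip1[OF d2 M] .
  have *: "\<bar>g v - g u\<bar> \<le> M * (v - u)^2" if uv: "u < v" "u = y \<or> v = y" for u v
  proof -
    obtain z where z: "u < z" "z < v" "g v - g u = (v - u) * (f1 z - f1 y)" using MVT2[OF uv(1), of g "\<lambda>v. f1 v - f1 y"] dg by auto
    have "\<bar>z - y\<bar> \<le> v - u" using z uv by auto
    then have "\<bar>f1 z - f1 y\<bar> \<le> M * (v - u)"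
      using lip[of z] M[of 0] by (smt (verit) mult_left_mono abs_ge_zero)
    then have "\<bar>g v - g u\<bar> \<le> (v - u) * (M * (v - u))" using z uv
      by (simp add: abs_mult mult_left_mono)
    then show ?thesis by (simp add: power2_eq_square mult.commute mult.left_commute)
  qed
  have "\<bar>g (y + d) - g y\<bar> \<le> M * d^2"
  proof -
    consider "d > 0" | "d < 0" | "d = 0" by linarith
    then show ?thesis
    proof cases
      case 1 then show ?thesis using *[of y "y+d"] by simp
    next
      case 2 then show ?thesis using *[of "y+d" y] by (simp add: abs_minus_commute power2_eq_square)
    qed (use M[of 0] in simp)
  qed
  moreover have "g (y + d) - g y = f (y + d) - f y - d * f1 y" unfolding g_def by (simp add: algebra_simps)
  ultimately show ?thesis by simp
qed

lemma quad_deriv: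
  fixes F :: "real \<Rightarrow> real"
  assumes "\<And>d. \<bar>F (x + d) - F x - d * L\<bar> \<le> C * d^2"
  shows "(F has_real_derivative L) (at x)"
proof -
  have "((\<lambda>h. (F (x + h) - F x) / h - L) \<longlongrightarrow> 0) (at 0)"
  proof (rule Lim_null_comparison)
    show "\<forall>\<^sub>F h in at 0. norm ((F (x + h) - F x) / h - L) \<le> C * \<bar>h\<bar>"
      unfolding eventually_at
    proof (intro exI[of _ 1] conjI ballI impI allI, simp)
      fix h :: real assume "h \<noteq> 0 \<and> dist h 0 < 1"
      then have h: "h \<noteq> 0" by simp
      have "(F (x + h) - F x) / h - L = (F (x + h) - F x - h * L) / h" using h by (simp add: field_simps)
      then have "norm ((F (x + h) - F x) / h - L) = \<bar>F (x + h) - F x - h * L\<bar> / \<bar>h\<bar>" by (simp add: abs_divide)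
      also have "\<dots> \<le> C * h^2 / \<bar>h\<bar>" using assms[of h] h by (intro divide_right_mono) auto
      also have "\<dots> = C * \<bar>h\<bar>"
      proof -
        show ?thesis using h by (cases "h>0") (auto simp: power2_eq_square field_simps)
      qed
      finally show "norm ((F (x + h) - F x) / h - L) \<le> C * \<bar>h\<bar>" .
    qed
    show "((\<lambda>h. C * \<bar>h\<bar>) \<longlongrightarrow> 0) (at 0)"
      by (auto intro!: tendsto_eq_intros)
  qed
  then have "((\<lambda>h. (F (x + h) - F x) / h) \<longlongrightarrow> L) (at 0)"
    by (simp add: LIM_zero_iff)
  then show ?thesis by (simp add: DERIV_def)
qed


abbreviation NN :: "real \<Rightarrow> real" where "NN \<equiv> normal_density 0 1"

lemma NN_eq: "NN z = exp (- (z\<^sup>2) / 2) / sqrt (2 * pi)"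
  by (simp add: normal_density_def)

lemma NN_int: "integrable lborel NN"
  using integrable_std_normal_moment[of 0] by simp

lemma NN_int1: "integral\<^sup>L lborel NN = 1"
  using integral_std_normal_moment_even[of 0] by simp

lemma NN_int_pow: "integrable lborel (\<lambda>z. NN z * z^k)"
  by (rule integrable_std_normal_moment)

lemma NN_int_abspow: "integrable lborel (\<lambda>z. NN z * \<bar>z\<bar>^k)"
  by (rule integrable_std_normal_moment_abs)

lemma NN_int_sq: "integral\<^sup>L lborel (\<lambda>z. NN z * z^2) = 1"
  using integral_std_normal_moment_even[of 1] by simp

lemma NN_deriv: "(NN has_real_derivative - z * NN z) (at z)"
  unfolding NN_eq[abs_def]
  by (rule derivative_eq_intros refl | simp)+ (simp add: field_simps)

lemma NN_lim_top: "(NN \<longlongrightarrow> 0) at_top"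
  unfolding NN_eq[abs_def] by real_asymp

lemma NN_lim_bot: "(NN \<longlongrightarrow> 0) at_bot"
  unfolding NN_eq[abs_def] by real_asymp

lemma int_NN_bdd:
  assumes [measurable]: "g \<in> borel_measurable lborel" and bd: "\<And>z. \<bar>g z\<bar> \<le> C"
  shows "integrable lborel (\<lambda>z. NN z * \<bar>z\<bar>^k * g z)"
proof (rule Bochner_Integration.integrable_bound[where f="\<lambda>z. C * (NN z * \<bar>z\<bar>^k)"])
  show "integrable lborel (\<lambda>z. C * (NN z * \<bar>z\<bar>^k))"
    using NN_int_abspow by (intro integrable_mult_right)
  show "AE z in lborel. norm (NN z * \<bar>z\<bar>^k * g z) \<le> norm (C * (NN z * \<bar>z\<bar>^k))"
  proof (intro AE_I2)
    fix z
    have "\<bar>NN z * \<bar>z\<bar>^k * g z\<bar> = (NN z * \<bar>z\<bar>^k) * \<bar>g z\<bar>" by (simp add: abs_mult)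
    also have "\<dots> \<le> (NN z * \<bar>z\<bar>^k) * C" by (intro mult_left_mono bd) auto
    also have "\<dots> \<le> \<bar>C * (NN z * \<bar>z\<bar>^k)\<bar>"
      by (simp add: abs_mult mult.commute mult_right_mono)
    finally show "norm (NN z * \<bar>z\<bar>^k * g z) \<le> norm (C * (NN z * \<bar>z\<bar>^k))" by simp
  qed
qed measurable

lemma int_NN_bdd0:
  assumes "g \<in> borel_measurable lborel" and "\<And>z. \<bar>g z\<bar> \<le> C"
  shows "integrable lborel (\<lambda>z. NN z * g z)"
  using int_NN_bdd[OF assms, where k=0] by simp

lemma int_NN_bdd1:
  assumes "g \<in> borel_measurable lborel" and "\<And>z. \<bar>g z\<bar> \<le> C"
  shows "integrable lborel (\<lambda>z. NN z * z * g z)"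
proof -
  have "(\<lambda>z. NN z * z * g z) = (\<lambda>z. NN z * \<bar>z\<bar>^1 * (sgn z * g z))"
    by (auto simp: fun_eq_iff sgn_if)
  moreover have "integrable lborel (\<lambda>z. NN z * \<bar>z\<bar>^1 * (sgn z * g z))"
  proof (rule int_NN_bdd[where C=C])
    show "(\<lambda>z. sgn z * g z) \<in> borel_measurable lborel" using assms(1) by measurable
    fix z
    have "\<bar>sgn z * g z\<bar> \<le> \<bar>g z\<bar>" by (simp add: abs_mult sgn_if)
    then show "\<bar>sgn z * g z\<bar> \<le> C" using assms(2)[of z] by linarith
  qed
  ultimately show ?thesis by simp
qed

lemma gauss_ibp:
  fixes g g1 :: "real \<Rightarrow> real"
  assumes dg: "\<And>y. (g has_real_derivative g1 y) (at y)"
    and cg1: "continuous_on UNIV g1"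
    and bg: "\<And>y. \<bar>g y\<bar> \<le> C" and bg1: "\<And>y. \<bar>g1 y\<bar> \<le> C1"
  shows "integral\<^sup>L lborel (\<lambda>z. NN z * z * g (x - s * z)) = - s * integral\<^sup>L lborel (\<lambda>z. NN z * g1 (x - s * z))"
proof -
  have cg: "continuous_on UNIV g" using dg by (meson DERIV_continuous continuous_at_imp_continuous_on)
  have mg[measurable]: "g \<in> borel_measurable borel" using cg by (rule borel_measurable_continuous_onI)
  have mg1[measurable]: "g1 \<in> borel_measurable borel" using cg1 by (rule borel_measurable_continuous_onI)
  define F where "F z = NN z * g (x - s * z)" for z
  define f where "f z = (- z * NN z) * g (x - s * z) + (g1 (x - s*z) * -s) * NN z" for z
  have i1: "integrable lborel (\<lambda>z. NN z * z * g (x - s * z))"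
    by (rule int_NN_bdd1[where C=C]) (use bg in auto)
  have i2: "integrable lborel (\<lambda>z. NN z * g1 (x - s * z))"
    by (rule int_NN_bdd0[where C=C1]) (use bg1 in auto)
  have fe: "f = (\<lambda>z. - (NN z * z * g (x - s * z)) - s * (NN z * g1 (x - s * z)))"
    unfolding f_def by (auto simp: fun_eq_iff algebra_simps)
  have fi: "integrable lborel f" unfolding fe using i1 i2 by auto
  have dF: "(F has_vector_derivative f z) (at z)" for z
  proof -
    have d1: "((\<lambda>z. x - s*z) has_real_derivative -s) (at z)" by (auto intro!: derivative_eq_intros)
    have d2: "((\<lambda>z. g (x - s*z)) has_real_derivative g1 (x - s*z) * -s) (at z)"
      by (rule DERIV_chain2[where f=g, OF dg d1])
    have "(F has_real_derivative (- z * NN z) * g (x - s * z) + (g1 (x - s*z) * -s) * NN z) (at z)"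
      unfolding F_def[abs_def] by (rule DERIV_mult[OF NN_deriv d2])
    then show ?thesis unfolding f_def has_real_derivative_iff_has_vector_derivative[symmetric] .
  qed
  have cf: "isCont f z" for z
  proof -
    have "continuous_on UNIV f" unfolding f_def NN_eq
      by (intro continuous_intros continuous_on_compose2[OF cg] continuous_on_compose2[OF cg1]) auto
    then show ?thesis by (simp add: continuous_on_eq_continuous_at)
  qed
  have Flim: "(F \<longlongrightarrow> 0) F'" if "(NN \<longlongrightarrow> 0) F'" for F'
  proof (rule Lim_null_comparison[where g="\<lambda>z. \<bar>C\<bar> * NN z"])
    show "\<forall>\<^sub>F z in F'. norm (F z) \<le> \<bar>C\<bar> * NN z"
    proof (intro always_eventually allI)
      fix z
      have "norm (F z) = NN z * \<bar>g (x - s * z)\<bar>" by (simp add: F_def abs_mult)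
      also have "\<dots> \<le> NN z * \<bar>C\<bar>" using bg[of "x - s*z"] by (intro mult_left_mono) auto
      finally show "norm (F z) \<le> \<bar>C\<bar> * NN z" by (simp add: mult.commute)
    qed
    show "((\<lambda>z. \<bar>C\<bar> * NN z) \<longlongrightarrow> 0) F'" using tendsto_mult_right_zero[OF that] .
  qed
  have "(LBINT z=-\<infinity>..\<infinity>. f z) = 0 - 0"
  proof (rule interval_integral_FTC_integrable)
    show "set_integrable lborel (einterval (-\<infinity>) \<infinity>) f"
      using fi by (simp add: einterval_eq_UNIV set_integrable_def)
    show "((F \<circ> real_of_ereal) \<longlongrightarrow> 0) (at_right (-\<infinity>))"
      unfolding ereal_tendsto_simps using Flim[OF NN_lim_bot] .
    show "((F \<circ> real_of_ereal) \<longlongrightarrow> 0) (at_left \<infinity>)"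
      unfolding ereal_tendsto_simps using Flim[OF NN_lim_top] .
  qed (use dF cf in auto)
  then have "integral\<^sup>L lborel f = 0"
    by (simp add: interval_lebesgue_integral_def einterval_eq_UNIV set_lebesgue_integral_def)
  then have "- integral\<^sup>L lborel (\<lambda>z. NN z * z * g (x - s * z)) - s * integral\<^sup>L lborel (\<lambda>z. NN z * g1 (x - s * z)) = 0"
    unfolding fe using i1 i2 by simp
  then show ?thesis by simp
qed


lemma int_err_bound:
  assumes "integrable lborel E" "\<And>z. \<bar>E z\<bar> \<le> c * (NN z * z^k)"
  shows "\<bar>integral\<^sup>L lborel E\<bar> \<le> c * integral\<^sup>L lborel (\<lambda>z. NN z * z^k)"
proof -
  have "norm (integral\<^sup>L lborel E) \<le> integral\<^sup>L lborel (\<lambda>z. c * (NN z * z^k))"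
    by (rule Bochner_Integration.integral_norm_bound_integral) (use assms NN_int_pow in auto)
  then show ?thesis by simp
qed

context hd
begin

definition Bd :: "nat \<Rightarrow> real" where "Bd n = (SOME B. \<forall>x. \<bar>H n x\<bar> \<le> B)"

lemma Bd: "\<bar>H n x\<bar> \<le> Bd n"
  using someI_ex[OF H_bound[of n]] unfolding Bd_def by blast

lemma Bd_nonneg: "0 \<le> Bd n" using Bd[of n 0] by linarith

lemma H_meas[measurable]: "H n \<in> borel_measurable borel"
  by (rule borel_measurable_continuous_onI[OF H_cont])

lemma H_int: "integrable lborel (\<lambda>z. NN z * H n (x - s * z))"
  by (rule int_NN_bdd0[where C="Bd n"]) (auto simp: Bd)

lemma H_int1: "integrable lborel (\<lambda>z. NN z * z * H n (x - s * z))"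
  by (rule int_NN_bdd1[where C="Bd n"]) (auto simp: Bd)

definition U :: "nat \<Rightarrow> real \<Rightarrow> real \<Rightarrow> real" where
  "U n x s = integral\<^sup>L lborel (\<lambda>z. NN z * H n (x - s * z))"

lemma U_dx: "((\<lambda>x. U n x s) has_real_derivative U (Suc n) x s) (at x)"
proof (rule quad_deriv[where C = "Bd (Suc (Suc n))"])
  fix d
  define E where "E z = NN z * H n (x + d - s * z) - NN z * H n (x - s * z) - d * (NN z * H (Suc n) (x - s * z))" for z
  have i: "integrable lborel E" unfolding E_def using H_int[of n "x+d" s] H_int[of n x s] H_int[of "Suc n" x s]
    by auto
  have "integral\<^sup>L lborel E = U n (x + d) s - U n x s - d * U (Suc n) x s"
    unfolding U_def E_def using H_int[of n "x+d" s] H_int[of n x s] H_int[of "Suc n" x s]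
    by simp
  moreover have "\<bar>integral\<^sup>L lborel E\<bar> \<le> Bd (Suc (Suc n)) * d^2 * integral\<^sup>L lborel (\<lambda>z. NN z * z^0)"
  proof (rule int_err_bound[OF i])
    fix z
    have t: "\<bar>H n ((x - s * z) + d) - H n (x - s * z) - d * H (Suc n) (x - s * z)\<bar> \<le> Bd (Suc (Suc n)) * d^2"
      by (rule taylor2[OF H_deriv H_deriv Bd])
    have arg: "x + d - s * z = (x - s * z) + d" by simp
    have "E z = NN z * (H n ((x - s * z) + d) - H n (x - s * z) - d * H (Suc n) (x - s * z))"
      unfolding E_def arg by (simp add: algebra_simps)
    then have "\<bar>E z\<bar> = NN z * \<bar>H n ((x - s * z) + d) - H n (x - s * z) - d * H (Suc n) (x - s * z)\<bar>"
      by (simp add: abs_mult)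
    also have "\<dots> \<le> NN z * (Bd (Suc (Suc n)) * d^2)" using t by (intro mult_left_mono) auto
    finally show "\<bar>E z\<bar> \<le> Bd (Suc (Suc n)) * d^2 * (NN z * z^0)" by (simp add: algebra_simps)
  qed
  ultimately show "\<bar>U n (x + d) s - U n x s - d * U (Suc n) x s\<bar> \<le> Bd (Suc (Suc n)) * d^2"
    using NN_int1 by simp
qed

lemma U_ds0: "((\<lambda>s. U n x s) has_real_derivative - integral\<^sup>L lborel (\<lambda>z. NN z * z * H (Suc n) (x - s * z))) (at s)"
proof (rule quad_deriv[where C = "Bd (Suc (Suc n))"])
  fix d
  define E where "E z = NN z * H n (x - (s + d) * z) - NN z * H n (x - s * z) + d * (NN z * z * H (Suc n) (x - s * z))" for z
  have i: "integrable lborel E" unfolding E_def using H_int[of n x "s+d"] H_int[of n x s] H_int1[of "Suc n" x s]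
    by auto
  have "integral\<^sup>L lborel E = U n x (s + d) - U n x s - d * - integral\<^sup>L lborel (\<lambda>z. NN z * z * H (Suc n) (x - s * z))"
    unfolding U_def E_def using H_int[of n x "s+d"] H_int[of n x s] H_int1[of "Suc n" x s]
    by simp
  moreover have "\<bar>integral\<^sup>L lborel E\<bar> \<le> Bd (Suc (Suc n)) * d^2 * integral\<^sup>L lborel (\<lambda>z. NN z * z^2)"
  proof (rule int_err_bound[OF i])
    fix z
    have t: "\<bar>H n ((x - s * z) + (- (d * z))) - H n (x - s * z) - (- (d * z)) * H (Suc n) (x - s * z)\<bar> \<le> Bd (Suc (Suc n)) * (- (d * z))^2"
      by (rule taylor2[OF H_deriv H_deriv Bd])
    have arg: "x - (s + d) * z = (x - s * z) + (- (d * z))" by (simp add: algebra_simps)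
    have "E z = NN z * (H n ((x - s * z) + (- (d * z))) - H n (x - s * z) - (- (d * z)) * H (Suc n) (x - s * z))"
      unfolding E_def arg by (simp add: algebra_simps)
    then have "\<bar>E z\<bar> = NN z * \<bar>H n ((x - s * z) + (- (d * z))) - H n (x - s * z) - (- (d * z)) * H (Suc n) (x - s * z)\<bar>"
      by (simp add: abs_mult)
    also have "\<dots> \<le> NN z * (Bd (Suc (Suc n)) * (- (d * z))^2)" using t by (intro mult_left_mono) auto
    finally show "\<bar>E z\<bar> \<le> Bd (Suc (Suc n)) * d^2 * (NN z * z^2)" by (simp add: algebra_simps power_mult_distrib)
  qed
  ultimately show "\<bar>U n x (s + d) - U n x s - d * - integral\<^sup>L lborel (\<lambda>z. NN z * z * H (Suc n) (x - s * z))\<bar> \<le> Bd (Suc (Suc n)) * d^2"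
    using NN_int_sq by simp
qed

lemma U_ds: "((\<lambda>s. U n x s) has_real_derivative s * U (Suc (Suc n)) x s) (at s)"
proof -
  have "integral\<^sup>L lborel (\<lambda>z. NN z * z * H (Suc n) (x - s * z)) = - s * U (Suc (Suc n)) x s"
    unfolding U_def by (rule gauss_ibp[OF H_deriv H_cont Bd Bd])
  then show ?thesis using U_ds0[of n x s] by simp
qed

lemma U_bound: "\<bar>U n x s\<bar> \<le> Bd n"
proof -
  have "\<bar>U n x s\<bar> \<le> Bd n * integral\<^sup>L lborel (\<lambda>z. NN z * z^0)"
    unfolding U_def
  proof (rule int_err_bound)
    show "integrable lborel (\<lambda>z. NN z * H n (x - s * z))" by (rule H_int)
    fix z show "\<bar>NN z * H n (x - s * z)\<bar> \<le> Bd n * (NN z * z ^ 0)"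
      using Bd[of n "x - s*z"] by (simp add: abs_mult) (metis mult.commute mult_left_mono normal_density_nonneg)
  qed
  then show ?thesis using NN_int1 by simp
qed

definition c1 :: real where "c1 = integral\<^sup>L lborel (\<lambda>z. NN z * \<bar>z\<bar>^1)"

lemma U_lip: "\<bar>U n x s - U n x' s'\<bar> \<le> Bd (Suc n) * (\<bar>x - x'\<bar> + \<bar>s - s'\<bar> * c1)"
proof -
  define A where "A = Bd (Suc n) * \<bar>x - x'\<bar>"
  define B where "B = Bd (Suc n) * \<bar>s - s'\<bar>"
  have eq: "U n x s - U n x' s' = integral\<^sup>L lborel (\<lambda>z. NN z * H n (x - s * z) - NN z * H n (x' - s' * z))"
    unfolding U_def using H_int[of n x s] H_int[of n x' s'] by simp
  have i1: "integrable lborel (\<lambda>z. NN z * H n (x - s * z) - NN z * H n (x' - s' * z))"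
    using H_int[of n x s] H_int[of n x' s'] by simp
  have i2: "integrable lborel (\<lambda>z. A * NN z + B * (NN z * \<bar>z\<bar>^1))"
    using NN_int NN_int_abspow[of 1] by simp
  have pw: "norm (NN z * H n (x - s * z) - NN z * H n (x' - s' * z)) \<le> A * NN z + B * (NN z * \<bar>z\<bar>^1)" for z
  proof -
    have l: "\<bar>H n (x - s * z) - H n (x' - s' * z)\<bar> \<le> Bd (Suc n) * \<bar>(x - s * z) - (x' - s' * z)\<bar>"
      by (rule lip1[OF H_deriv Bd])
    have e0: "(x - s * z) - (x' - s' * z) = (x - x') - (s - s') * z" by (simp add: algebra_simps)
    have tr: "\<bar>(x - x') - (s - s') * z\<bar> \<le> \<bar>x - x'\<bar> + \<bar>s - s'\<bar> * \<bar>z\<bar>"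
      using abs_triangle_ineq4[of "x - x'" "(s - s') * z"] by (simp add: abs_mult)
    have l2: "\<bar>H n (x - s * z) - H n (x' - s' * z)\<bar> \<le> Bd (Suc n) * (\<bar>x - x'\<bar> + \<bar>s - s'\<bar> * \<bar>z\<bar>)"
      using l tr Bd_nonneg[of "Suc n"] unfolding e0 by (meson mult_left_mono order_trans)
    have "NN z * \<bar>H n (x - s * z) - H n (x' - s' * z)\<bar> \<le> NN z * (Bd (Suc n) * (\<bar>x - x'\<bar> + \<bar>s - s'\<bar> * \<bar>z\<bar>))"
      using l2 by (intro mult_left_mono) auto
    moreover have "norm (NN z * H n (x - s * z) - NN z * H n (x' - s' * z)) = NN z * \<bar>H n (x - s * z) - H n (x' - s' * z)\<bar>"
      by (simp add: abs_mult flip: right_diff_distrib)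
    moreover have "NN z * (Bd (Suc n) * (\<bar>x - x'\<bar> + \<bar>s - s'\<bar> * \<bar>z\<bar>)) = A * NN z + B * (NN z * \<bar>z\<bar>^1)"
      unfolding A_def B_def by (simp add: algebra_simps)
    ultimately show ?thesis by simp
  qed
  have "norm (integral\<^sup>L lborel (\<lambda>z. NN z * H n (x - s * z) - NN z * H n (x' - s' * z))) \<le> integral\<^sup>L lborel (\<lambda>z. A * NN z + B * (NN z * \<bar>z\<bar>^1))"
    by (rule Bochner_Integration.integral_norm_bound_integral[OF i1 i2 pw])
  moreover have "integral\<^sup>L lborel (\<lambda>z. A * NN z + B * (NN z * \<bar>z\<bar>^1)) = A + B * c1"
    using NN_int NN_int_abspow[of 1] NN_int1 unfolding c1_def by simp
  ultimately show ?thesis unfolding eq A_def B_def by (simp add: algebra_simps)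
qed

lemma U_cont: "continuous_on UNIV (\<lambda>p. U n (fst p) (snd p))"
proof -
  have "isCont (\<lambda>p. U n (fst p) (snd p)) (x, s)" for x s
  proof -
    have "((\<lambda>p. U n (fst p) (snd p) - U n x s) \<longlongrightarrow> 0) (at (x, s))"
    proof (rule Lim_null_comparison)
      show "\<forall>\<^sub>F p in at (x, s). norm (U n (fst p) (snd p) - U n x s) \<le> Bd (Suc n) * (\<bar>fst p - x\<bar> + \<bar>snd p - s\<bar> * c1)"
        using U_lip by (intro always_eventually) auto
      have "((\<lambda>p. Bd (Suc n) * (\<bar>fst p - x\<bar> + \<bar>snd p - s\<bar> * c1)) \<longlongrightarrow> Bd (Suc n) * (\<bar>fst (x,s) - x\<bar> + \<bar>snd (x,s) - s\<bar> * c1)) (at (x, s))"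
        by (intro tendsto_intros)
      then show "((\<lambda>p. Bd (Suc n) * (\<bar>fst p - x\<bar> + \<bar>snd p - s\<bar> * c1)) \<longlongrightarrow> 0) (at (x, s))" by simp
    qed
    then show ?thesis unfolding isCont_def by (simp add: LIM_zero_iff)
  qed
  then show ?thesis by (auto intro: continuous_at_imp_continuous_on)
qed

lemma U_zero: "U n x 0 = H n x"
  unfolding U_def using NN_int1 by simp

lemma U_periodic: "U n (x + 2 * of_int m) s = U n x s"
proof -
  have "H n (x + 2 * of_int m - s * z) = H n (x - s * z)" for z
    using H_periodic[of n "x - s * z" m] by (simp add: algebra_simps)
  then show ?thesis unfolding U_def by simp
qed

lemma NN_even: "NN (- z) = NN z" by (simp add: NN_eq)

lemma U0_odd: "U 0 (- x) s = - U 0 x s"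
proof -
  have "U 0 (- x) s = \<bar>-1\<bar> *\<^sub>R integral\<^sup>L lborel (\<lambda>z. NN (0 + -1 * z) * H 0 (- x - s * (0 + -1 * z)))"
    unfolding U_def by (rule lborel_integral_real_affine) simp
  also have "\<dots> = integral\<^sup>L lborel (\<lambda>z. - (NN z * H 0 (x - s * z)))"
  proof -
    have "H 0 (- x - s * (0 + -1 * z)) = - H 0 (x - s * z)" for z
      using H0_odd[of "x - s * z"] by (simp add: algebra_simps)
    then show ?thesis by (simp add: NN_even)
  qed
  also have "\<dots> = - U 0 x s" unfolding U_def by simp
  finally show ?thesis .
qed

end

lemma maxp:
  fixes w :: "real \<Rightarrow> real \<Rightarrow> real"
  assumes cont: "continuous_on ({0..1} \<times> {0..}) (\<lambda>(x,t). w x t)"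
    and bc: "\<And>t. t > 0 \<Longrightarrow> w 0 t \<le> 0 \<and> w 1 t \<le> 0"
    and init: "\<And>x. x \<in> {0..1} \<Longrightarrow> w x 0 \<le> 0"
    and heat: "\<forall>x t. 0 < x \<and> x < 1 \<and> 0 < t \<longrightarrow>
        (\<forall>y\<in>{0<..<1}. (\<lambda>z. w z t) differentiable (at y)) \<and>
        (\<exists>D. (deriv (\<lambda>z. w z t) has_real_derivative D) (at x) \<and>
             ((\<lambda>s. w x s) has_real_derivative D) (at t))"
    and x1: "x1 \<in> {0..1}" and t1: "t1 \<ge> 0"
  shows "w x1 t1 \<le> 0"
proof (rule ccontr)
  assume "\<not> w x1 t1 \<le> 0"
  then have pos: "w x1 t1 > 0" by simp
  have t1p: "t1 > 0" using init[OF x1] pos t1 by (cases "t1 = 0") auto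
  define \<delta> where "\<delta> = w x1 t1 / (2 * t1)"
  have dpos: "\<delta> > 0" using pos t1p by (simp add: \<delta>_def)
  define K where "K = {0..1::real} \<times> {0..t1}"
  define v where "v p = w (fst p) (snd p) - \<delta> * snd p" for p
  have "continuous_on K (\<lambda>(x,t). w x t)" by (rule continuous_on_subset[OF cont]) (auto simp: K_def)
  then have cv: "continuous_on K v" unfolding v_def
    by (intro continuous_intros) (simp add: case_prod_beta')
  have "compact K" unfolding K_def by (intro compact_Times compact_Icc)
  moreover have "K \<noteq> {}" using t1 by (auto simp: K_def)
  ultimately obtain p0 where p0: "p0 \<in> K" and pmax: "\<And>q. q \<in> K \<Longrightarrow> v q \<le> v p0"
    using continuous_attains_sup[OF _ _ cv] by blast
  obtain x0 t0 where p0e: "p0 = (x0, t0)" by fastforce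
  have vx1: "v (x1, t1) = w x1 t1 / 2" using t1p by (simp add: v_def \<delta>_def field_simps)
  have "v (x1, t1) \<le> v p0" using pmax x1 t1 by (auto simp: K_def)
  then have vp0: "v p0 > 0" using vx1 pos by simp
  have x0r: "0 \<le> x0" "x0 \<le> 1" and t0r: "0 \<le> t0" "t0 \<le> t1" using p0 by (auto simp: K_def p0e)
  have t0p: "t0 > 0"
  proof (rule ccontr)
    assume "\<not> t0 > 0" then have "t0 = 0" using t0r by simp
    then show False using vp0 init[of x0] x0r by (simp add: v_def p0e)
  qed
  have x0p: "0 < x0" "x0 < 1"
  proof -
    have "v p0 \<le> 0" if "x0 = 0 \<or> x0 = 1" using that bc[OF t0p] dpos t0p
      by (auto simp: v_def p0e intro: add_nonpos_nonpos) (smt (verit) mult_pos_pos)+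
    then show "0 < x0" "x0 < 1" using vp0 x0r by force+
  qed
  from heat x0p t0p obtain D where
    dif: "\<forall>y\<in>{0<..<1}. (\<lambda>z. w z t0) differentiable (at y)"
    and Dx: "(deriv (\<lambda>z. w z t0) has_real_derivative D) (at x0)"
    and Dt: "((\<lambda>s. w x0 s) has_real_derivative D) (at t0)" by blast
  define f where "f z = w z t0" for z
  define W1 where "W1 = deriv f"
  have fd: "(f has_real_derivative W1 y) (at y)" if "0 < y" "y < 1" for y
    using dif that unfolding W1_def f_def by (auto simp: DERIV_deriv_iff_real_differentiable)
  have fmax: "f y \<le> f x0" if "0 \<le> y" "y \<le> 1" for y
  proof -
    have "v (y, t0) \<le> v p0" using pmax that t0r by (auto simp: K_def)
    then show ?thesis by (simp add: v_def p0e f_def)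
  qed
  have W10: "W1 x0 = 0"
  proof (rule DERIV_local_max[OF fd[OF x0p]])
    show "0 < min x0 (1 - x0)" using x0p by simp
    show "\<forall>y. \<bar>x0 - y\<bar> < min x0 (1 - x0) \<longrightarrow> f y \<le> f x0"
      by (auto intro!: fmax simp: abs_less_iff)
  qed
  have Dle: "D \<le> 0"
  proof (rule ccontr)
    assume "\<not> D \<le> 0" then have Dp: "D > 0" by simp
    have "(W1 has_real_derivative D) (at x0)" using Dx unfolding W1_def f_def .
    from DERIV_pos_inc_right[OF this Dp] obtain d where d: "d > 0" "\<And>h. h > 0 \<Longrightarrow> h < d \<Longrightarrow> W1 x0 < W1 (x0 + h)"
      by blast
    define m where "m = min d (1 - x0)"
    have m: "0 < m" "m \<le> 1 - x0" "m \<le> d" using d x0p by (auto simp: m_def)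
    define y where "y = x0 + m / 2"
    have "m / 2 < m" "0 < m / 2" using m by auto
    then have y: "x0 < y" "y < 1" "y - x0 < d" using m by (auto simp: y_def)
    obtain \<xi> where xi: "x0 < \<xi>" "\<xi> < y" "f y - f x0 = (y - x0) * W1 \<xi>"
      using MVT2[OF y(1), of f W1] fd x0p y by force
    have "W1 \<xi> > 0" using d(2)[of "\<xi> - x0"] xi y W10 by simp
    then have "(y - x0) * W1 \<xi> > 0" using xi by (intro mult_pos_pos) auto
    then have "f y > f x0" using xi(3) by linarith
    moreover have "f y \<le> f x0" using fmax y x0p by simp
    ultimately show False by simp
  qed
  have gd: "((\<lambda>s. w x0 s - \<delta> * s) has_real_derivative D - \<delta>) (at t0)"
    using Dt by (auto intro!: derivative_eq_intros)
  have "D - \<delta> \<ge> 0"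
  proof (rule ccontr)
    assume "\<not> D - \<delta> \<ge> 0" then have "D - \<delta> < 0" by simp
    from DERIV_neg_dec_left[OF gd this] obtain d where d: "d > 0"
      "\<And>h. h > 0 \<Longrightarrow> h < d \<Longrightarrow> w x0 t0 - \<delta> * t0 < w x0 (t0 - h) - \<delta> * (t0 - h)" by blast
    define h where "h = min d t0 / 2"
    have h: "h > 0" "h < d" "t0 - h \<ge> 0" using d t0p by (auto simp: h_def)
    have "v (x0, t0 - h) \<le> v p0" using pmax h x0r t0r by (auto simp: K_def)
    then show False using d(2)[OF h(1,2)] by (simp add: v_def p0e)
  qed
  then show False using Dle dpos by simp
qed


context hd
begin

definition u :: "nat \<Rightarrow> real \<Rightarrow> real \<Rightarrow> real" where "u n x t = U n x (sqrt (2 * t))"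

lemma u_dx: "((\<lambda>x. u n x t) has_real_derivative u (Suc n) x t) (at x)"
  unfolding u_def by (rule U_dx)

lemma u_dt: assumes t: "t > 0"
  shows "((\<lambda>t. u n x t) has_real_derivative u (Suc (Suc n)) x t) (at t)"
proof -
  have s: "sqrt (2 * t) > 0" using t by simp
  have d2: "((\<lambda>t. 2 * t) has_real_derivative 2) (at t)" by (auto intro!: derivative_eq_intros)
  have sq: "((\<lambda>t. sqrt (2 * t)) has_real_derivative inverse (sqrt (2 * t)) / 2 * 2) (at t)"
    by (rule DERIV_chain2[OF DERIV_real_sqrt d2]) (use t in simp)
  have "((\<lambda>t. U n x (sqrt (2 * t))) has_real_derivative
      (sqrt (2 * t) * U (Suc (Suc n)) x (sqrt (2 * t))) * (inverse (sqrt (2 * t)) / 2 * 2)) (at t)"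
    by (rule DERIV_chain2[where f="\<lambda>s. U n x s", OF U_ds sq])
  moreover have "(sqrt (2 * t) * U (Suc (Suc n)) x (sqrt (2 * t))) * (inverse (sqrt (2 * t)) / 2 * 2) = U (Suc (Suc n)) x (sqrt (2 * t))"
    using s by (simp add: field_simps)
  ultimately show ?thesis unfolding u_def by (metis (no_types, lifting))
qed

lemma u_cont: "continuous_on UNIV (\<lambda>p. u n (fst p) (snd p))"
proof -
  have "continuous_on UNIV (\<lambda>p. U n (fst (fst p, sqrt (2 * snd p))) (snd (fst p, sqrt (2 * snd p))))"
    by (rule continuous_on_compose2[OF U_cont, where f="\<lambda>p. (fst p, sqrt (2 * snd p))"])
       (auto intro!: continuous_intros)
  then show ?thesis unfolding u_def by simp
qed

lemma u_isCont: "isCont (\<lambda>p. u n (fst p) (snd p)) p"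
  using u_cont continuous_on_eq_continuous_at by blast

lemma u_bound: "\<bar>u n x t\<bar> \<le> Bd n" unfolding u_def by (rule U_bound)

lemma u_zero: "u n x 0 = H n x" unfolding u_def by (simp add: U_zero)

lemma u_periodic: "u n (x + 2 * of_int m) t = u n x t" unfolding u_def by (rule U_periodic)

lemma u0_odd: "u 0 (- x) t = - u 0 x t" unfolding u_def by (rule U0_odd)

lemma u0_bc: "u 0 0 t = 0" "u 0 1 t = 0"
proof -
  show "u 0 0 t = 0" using u0_odd[of 0 t] by simp
  have "u 0 1 t = u 0 (-1 + 2 * of_int 1) t" by simp
  also have "\<dots> = u 0 (-1) t" by (rule u_periodic)
  also have "\<dots> = - u 0 1 t" by (rule u0_odd)
  finally show "u 0 1 t = 0" by simp
qed

end

locale hd2 = hd r0 a b for r0 a b +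
  fixes rho :: "real \<Rightarrow> real \<Rightarrow> real"
  assumes rho_cont: "continuous_on ({0..1} \<times> {0..}) (\<lambda>(x,t). rho x t)"
    and rho_heat: "\<forall>x t. 0 < x \<and> x < 1 \<and> 0 < t \<longrightarrow>
        (\<forall>y\<in>{0<..<1}. (\<lambda>z. rho z t) differentiable (at y)) \<and>
        (\<exists>D. (deriv (\<lambda>z. rho z t) has_real_derivative D) (at x) \<and>
             ((\<lambda>s. rho x s) has_real_derivative D) (at t))"
    and rho_bc: "\<forall>t>0. rho 0 t = 0 \<and> rho 1 t = 0"
    and rho_init: "\<forall>x\<in>{0..1}. rho x 0 = r0 x"
begin

lemma heat_diff:
  fixes w1 w2 :: "real \<Rightarrow> real \<Rightarrow> real" and c :: real
  assumes h1: "\<forall>x t. 0 < x \<and> x < 1 \<and> 0 < t \<longrightarrow>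
        (\<forall>y\<in>{0<..<1}. (\<lambda>z. w1 z t) differentiable (at y)) \<and>
        (\<exists>D. (deriv (\<lambda>z. w1 z t) has_real_derivative D) (at x) \<and>
             ((\<lambda>s. w1 x s) has_real_derivative D) (at t))"
   and h2: "\<forall>x t. 0 < x \<and> x < 1 \<and> 0 < t \<longrightarrow>
        (\<forall>y\<in>{0<..<1}. (\<lambda>z. w2 z t) differentiable (at y)) \<and>
        (\<exists>D. (deriv (\<lambda>z. w2 z t) has_real_derivative D) (at x) \<and>
             ((\<lambda>s. w2 x s) has_real_derivative D) (at t))"
  shows "\<forall>x t. 0 < x \<and> x < 1 \<and> 0 < t \<longrightarrow>
        (\<forall>y\<in>{0<..<1}. (\<lambda>z. w1 z t - w2 z t) differentiable (at y)) \<and>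
        (\<exists>D. (deriv (\<lambda>z. w1 z t - w2 z t) has_real_derivative D) (at x) \<and>
             ((\<lambda>s. w1 x s - w2 x s) has_real_derivative D) (at t))"
proof (intro allI impI conjI)
  fix x t :: real assume xt: "0 < x \<and> x < 1 \<and> 0 < t"
  show "\<forall>y\<in>{0<..<1}. (\<lambda>z. w1 z t - w2 z t) differentiable (at y)"
    using h1 h2 xt by (auto intro!: differentiable_diff)
  obtain D1 where D1: "(deriv (\<lambda>z. w1 z t) has_real_derivative D1) (at x)" "((\<lambda>s. w1 x s) has_real_derivative D1) (at t)"
    using h1 xt by blast
  obtain D2 where D2: "(deriv (\<lambda>z. w2 z t) has_real_derivative D2) (at x)" "((\<lambda>s. w2 x s) has_real_derivative D2) (at t)"
    using h2 xt by blast
  have eq: "deriv (\<lambda>z. w1 z t) y - deriv (\<lambda>z. w2 z t) y = deriv (\<lambda>z. w1 z t - w2 z t) y" if "y \<in> {0<..<1}" for y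
  proof -
    have "(\<lambda>z. w1 z t) differentiable (at y)" "(\<lambda>z. w2 z t) differentiable (at y)" using h1 h2 xt that by auto
    then have "((\<lambda>z. w1 z t - w2 z t) has_real_derivative deriv (\<lambda>z. w1 z t) y - deriv (\<lambda>z. w2 z t) y) (at y)"
      by (intro DERIV_diff) (auto simp: DERIV_deriv_iff_real_differentiable)
    then show ?thesis by (rule DERIV_imp_deriv[symmetric])
  qed
  have "((\<lambda>y. deriv (\<lambda>z. w1 z t) y - deriv (\<lambda>z. w2 z t) y) has_real_derivative D1 - D2) (at x)"
    using D1 D2 by (intro DERIV_diff)
  then have "(deriv (\<lambda>z. w1 z t - w2 z t) has_real_derivative D1 - D2) (at x)"
    by (rule has_field_derivative_transform_within_open[of _ _ _ "{0<..<1}"]) (use xt eq in auto)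
  moreover have "((\<lambda>s. w1 x s - w2 x s) has_real_derivative D1 - D2) (at t)"
    using D1 D2 by (intro DERIV_diff)
  ultimately show "\<exists>D. (deriv (\<lambda>z. w1 z t - w2 z t) has_real_derivative D) (at x) \<and>
             ((\<lambda>s. w1 x s - w2 x s) has_real_derivative D) (at t)" by blast
qed

lemma u_heat: "\<forall>x t. 0 < x \<and> x < 1 \<and> 0 < t \<longrightarrow>
        (\<forall>y\<in>{0<..<1}. (\<lambda>z. u 0 z t) differentiable (at y)) \<and>
        (\<exists>D. (deriv (\<lambda>z. u 0 z t) has_real_derivative D) (at x) \<and>
             ((\<lambda>s. u 0 x s) has_real_derivative D) (at t))"
proof (intro allI impI conjI)
  fix x t :: real assume xt: "0 < x \<and> x < 1 \<and> 0 < t"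
  show "\<forall>y\<in>{0<..<1}. (\<lambda>z. u 0 z t) differentiable (at y)"
    using u_dx real_differentiable_def by blast
  have "deriv (\<lambda>z. u 0 z t) = (\<lambda>z. u 1 z t)"
  proof
    fix z show "deriv (\<lambda>z. u 0 z t) z = u 1 z t" using DERIV_imp_deriv[OF u_dx[of 0 t z]] by simp
  qed
  then show "\<exists>D. (deriv (\<lambda>z. u 0 z t) has_real_derivative D) (at x) \<and>
             ((\<lambda>s. u 0 x s) has_real_derivative D) (at t)"
    using u_dx[of 1 t x] u_dt[of t 0 x] xt by (auto simp: numeral_2_eq_2)
qed

lemma rho_eq_u: assumes "x \<in> {0..1}" "t \<ge> 0" shows "rho x t = u 0 x t"
proof -
  have uc: "continuous_on ({0..1} \<times> {0..}) (\<lambda>(x,t). u 0 x t)"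
    using continuous_on_subset[OF u_cont[of 0]] by (simp add: case_prod_beta')
  have init: "rho x 0 - u 0 x 0 = 0" if "x \<in> {0..1}" for x
    using rho_init that by (simp add: u_zero H0_r0)
  have "rho x t - u 0 x t \<le> 0"
  proof (rule maxp[where w="\<lambda>x t. rho x t - u 0 x t"])
    show "continuous_on ({0..1} \<times> {0..}) (\<lambda>(x, t). rho x t - u 0 x t)"
      using continuous_on_diff[OF rho_cont uc] by (simp add: case_prod_beta')
    show "\<forall>x t. 0 < x \<and> x < 1 \<and> 0 < t \<longrightarrow>
        (\<forall>y\<in>{0<..<1}. (\<lambda>z. rho z t - u 0 z t) differentiable (at y)) \<and>
        (\<exists>D. (deriv (\<lambda>z. rho z t - u 0 z t) has_real_derivative D) (at x) \<and>
             ((\<lambda>s. rho x s - u 0 x s) has_real_derivative D) (at t))"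
      by (rule heat_diff[OF rho_heat u_heat])
  qed (use assms rho_bc u0_bc init in auto)
  moreover have "u 0 x t - rho x t \<le> 0"
  proof (rule maxp[where w="\<lambda>x t. u 0 x t - rho x t"])
    show "continuous_on ({0..1} \<times> {0..}) (\<lambda>(x, t). u 0 x t - rho x t)"
      using continuous_on_diff[OF uc rho_cont] by (simp add: case_prod_beta')
    show "\<forall>x t. 0 < x \<and> x < 1 \<and> 0 < t \<longrightarrow>
        (\<forall>y\<in>{0<..<1}. (\<lambda>z. u 0 z t - rho z t) differentiable (at y)) \<and>
        (\<exists>D. (deriv (\<lambda>z. u 0 z t - rho z t) has_real_derivative D) (at x) \<and>
             ((\<lambda>s. u 0 x s - rho x s) has_real_derivative D) (at t))"
      by (rule heat_diff[OF u_heat rho_heat])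
  qed (use assms rho_bc u0_bc init in auto)
  ultimately show ?thesis by simp
qed

lemma rhohat_eq: assumes t: "t \<ge> 0" shows "rho_hat rho x t = u 0 x t"
proof -
  define k where "k = \<lfloor>x / 2\<rfloor>"
  define y where "y = x - 2 * of_int k"
  have "of_int k \<le> x / 2" "x / 2 < of_int k + 1" unfolding k_def by linarith+
  then have y: "0 \<le> y" "y < 2" unfolding y_def by (simp_all add: field_simps)
  have xe: "x = y + 2 * of_int k" by (simp add: y_def)
  show ?thesis
  proof (cases "y \<le> 1")
    case True
    then have "rho_hat rho x t = rho y t" by (simp add: rho_hat_def Let_def y_def k_def)
    also have "\<dots> = u 0 y t" using rho_eq_u True y t by simp
    also have "\<dots> = u 0 x t" unfolding xe by (rule u_periodic[symmetric])
    finally show ?thesis .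
  next
    case False
    then have "rho_hat rho x t = - rho (2 - y) t" by (simp add: rho_hat_def Let_def y_def k_def)
    also have "\<dots> = - u 0 (2 - y) t" using rho_eq_u False y t by simp
    also have "\<dots> = u 0 (y - 2) t" using u0_odd[of "y - 2" t] by simp
    also have "\<dots> = u 0 ((y - 2) + 2 * of_int (k + 1)) t" by (rule u_periodic[symmetric])
    also have "(y - 2) + 2 * of_int (k + 1) = x" unfolding xe by simp
    finally show ?thesis .
  qed
qed

end

lemma ftc_Ioo:
  fixes F f :: "real \<Rightarrow> real"
  assumes ab: "a \<le> b" and cF: "continuous_on {a..b} F"
    and dF: "\<And>t. a < t \<Longrightarrow> t < b \<Longrightarrow> (F has_real_derivative f t) (at t)"
    and cf: "continuous_on {a..b} f"
  shows "set_integrable lborel {a<..<b} f" "(LINT t:{a<..<b}|lborel. f t) = F b - F a"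
proof -
  have i: "integrable lborel (\<lambda>t. indicator {a..b} t *\<^sub>R f t)"
    by (rule borel_integrable_compact[OF compact_Icc cf])
  then have si: "set_integrable lborel {a..b} f" by (simp add: set_integrable_def)
  show si2: "set_integrable lborel {a<..<b} f"
    by (rule set_integrable_subset[OF si]) auto
  have "(f has_integral F b - F a) {a..b}"
    by (rule fundamental_theorem_of_calculus_interior[OF ab cF])
       (use dF in \<open>auto simp: has_real_derivative_iff_has_vector_derivative\<close>)
  then have hi: "(f has_integral F b - F a) {a<..<b}" by (simp add: has_integral_Icc_iff_Ioo)
  have "(LINT t:{a<..<b}|lborel. f t) = integral {a<..<b} f"
    by (rule set_borel_integral_eq_integral(2)[OF si2])
  also have "\<dots> = F b - F a" using hi by (rule integral_unique)
  finally show "(LINT t:{a<..<b}|lborel. f t) = F b - F a" .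
qed

lemma cs_int:
  fixes f :: "'a::euclidean_space \<Rightarrow> real"
  assumes K: "compact K" and c: "continuous_on UNIV f" and z: "\<And>z. z \<notin> K \<Longrightarrow> f z = 0"
  shows "integrable lborel f"
proof -
  have "integrable lborel (\<lambda>x. indicator K x *\<^sub>R f x)"
    by (rule borel_integrable_compact[OF K continuous_on_subset[OF c]]) auto
  moreover have "(\<lambda>x. indicator K x *\<^sub>R f x) = f" using z by (auto simp: fun_eq_iff indicator_def)
  ultimately show ?thesis by simp
qed

lemma fub_fst:
  fixes g :: "real \<times> real \<Rightarrow> real"
  assumes "integrable lborel g"
  shows "integral\<^sup>L lborel g = (\<integral>x. (\<integral>t. g (x, t) \<partial>lborel) \<partial>lborel)"
proof -
  have "integrable (lborel \<Otimes>\<^sub>M lborel) (case_prod (\<lambda>x t. g (x, t)))"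
    using assms by (simp add: lborel_prod)
  from lborel_pair.integral_fst[OF this] show ?thesis by (simp add: lborel_prod)
qed

lemma fub_snd:
  fixes g :: "real \<times> real \<Rightarrow> real"
  assumes "integrable lborel g"
  shows "integral\<^sup>L lborel g = (\<integral>t. (\<integral>x. g (x, t) \<partial>lborel) \<partial>lborel)"
proof -
  have "integrable (lborel \<Otimes>\<^sub>M lborel) (case_prod (\<lambda>x t. g (x, t)))"
    using assms by (simp add: lborel_prod)
  from lborel_pair.integral_snd[OF this] show ?thesis by (simp add: lborel_prod)
qed

lemma QT_sets: "QT T \<in> sets lborel"
  unfolding QT_def sets_lborel by (intro borel_open open_Times) auto

lemma compact_bound_x:
  assumes "compact (K :: (real \<times> real) set)"
  obtains R where "R > 0" "\<And>x t. \<bar>x\<bar> \<ge> R \<Longrightarrow> (x, t) \<notin> K"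
proof -
  obtain R0 where R0: "\<forall>z\<in>K. norm z \<le> R0" using compact_imp_bounded[OF assms] bounded_iff by blast
  show ?thesis
  proof (rule that[of "\<bar>R0\<bar> + 1"])
    fix x t :: real assume x: "\<bar>x\<bar> \<ge> \<bar>R0\<bar> + 1"
    have "norm (x, t) \<ge> \<bar>x\<bar>" unfolding norm_Pair by (simp add: real_sqrt_ge_abs1) 
    then show "(x, t) \<notin> K" using R0 x by force
  qed simp
qed

lemma main_ineq:
  fixes A At Bf Bx C :: "real \<times> real \<Rightarrow> real" and T :: real
  assumes T: "T > 0" and K: "compact K" "K \<subseteq> {z. snd z < T}"
    and cA: "continuous_on UNIV A" and cAt: "continuous_on UNIV At"
    and cB: "continuous_on UNIV Bf" and cBx: "continuous_on UNIV Bx" and cC: "continuous_on UNIV C"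
    and van: "\<And>z. z \<notin> K \<Longrightarrow> A z = 0 \<and> At z = 0 \<and> Bf z = 0 \<and> Bx z = 0 \<and> C z = 0"
    and dA: "\<And>x t. 0 < t \<Longrightarrow> t < T \<Longrightarrow> ((\<lambda>t. A (x, t)) has_real_derivative At (x, t)) (at t)"
    and dB: "\<And>x t. 0 < t \<Longrightarrow> t < T \<Longrightarrow> ((\<lambda>x. Bf (x, t)) has_real_derivative Bx (x, t)) (at x)"
    and Cnn: "\<And>x t. 0 < t \<Longrightarrow> t < T \<Longrightarrow> 0 \<le> C (x, t)"
  shows "set_integrable lborel (QT T) (\<lambda>z. At z + Bx z + C z)"
    "integrable lborel (\<lambda>x. A (x, 0))"
    "(LINT z:QT T|lborel. At z + Bx z + C z) + (LINT x|lborel. A (x, 0)) \<ge> 0"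
proof -
  obtain R where R: "R > 0" "\<And>x t. \<bar>x\<bar> \<ge> R \<Longrightarrow> (x, t) \<notin> K" using compact_bound_x[OF K(1)] by blast
  have iAt: "integrable lborel At" by (rule cs_int[OF K(1) cAt]) (use van in auto)
  have iBx: "integrable lborel Bx" by (rule cs_int[OF K(1) cBx]) (use van in auto)
  have iC: "integrable lborel C" by (rule cs_int[OF K(1) cC]) (use van in auto)
  have sAt: "set_integrable lborel (QT T) At" unfolding set_integrable_def
    by (rule integrable_mult_indicator[OF QT_sets iAt])
  have sBx: "set_integrable lborel (QT T) Bx" unfolding set_integrable_def
    by (rule integrable_mult_indicator[OF QT_sets iBx])
  have sC: "set_integrable lborel (QT T) C" unfolding set_integrable_def
    by (rule integrable_mult_indicator[OF QT_sets iC])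
  show "set_integrable lborel (QT T) (\<lambda>z. At z + Bx z + C z)"
    using sAt sBx sC by auto
  have cA0: "continuous_on UNIV (\<lambda>x. A (x, 0))"
    by (rule continuous_on_compose2[OF cA]) (auto intro!: continuous_intros)
  show iA0: "integrable lborel (\<lambda>x. A (x, 0))"
  proof (rule cs_int[OF compact_Icc[of "-R" R] cA0])
    fix x :: real assume "x \<notin> {-R..R}"
    then have "\<bar>x\<bar> \<ge> R" by auto
    then show "A (x, 0) = 0" using van R(2) by blast
  qed
  have indQT: "indicator (QT T) (x, t) = (indicator {0<..<T} t :: real)" for x t
    by (simp add: QT_def indicator_def)
  have inner_t: "(\<integral>t. indicator (QT T) (x, t) * At (x, t) \<partial>lborel) = - A (x, 0)" for x
  proof -
    have cAx: "continuous_on {0..T} (\<lambda>t. A (x, t))"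
      by (rule continuous_on_compose2[OF cA]) (auto intro!: continuous_intros)
    have cAtx: "continuous_on {0..T} (\<lambda>t. At (x, t))"
      by (rule continuous_on_compose2[OF cAt]) (auto intro!: continuous_intros)
    have "(LINT t:{0<..<T}|lborel. At (x, t)) = A (x, T) - A (x, 0)"
      by (rule ftc_Ioo(2)[OF _ cAx dA cAtx]) (use T in auto)
    moreover have "A (x, T) = 0" using van K(2) by force
    ultimately show ?thesis by (simp add: indQT set_lebesgue_integral_def)
  qed
  have intAt: "(LINT z:QT T|lborel. At z) = - (LINT x|lborel. A (x, 0))"
  proof -
    have "(LINT z:QT T|lborel. At z) = integral\<^sup>L lborel (\<lambda>z. indicator (QT T) z * At z)"
      by (simp add: set_lebesgue_integral_def)
    also have "\<dots> = (\<integral>x. (\<integral>t. indicator (QT T) (x, t) * At (x, t) \<partial>lborel) \<partial>lborel)"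
      by (rule fub_fst) (use sAt in \<open>simp add: set_integrable_def\<close>)
    also have "\<dots> = (\<integral>x. - A (x, 0) \<partial>lborel)" by (simp add: inner_t)
    finally show ?thesis by simp
  qed
  have inner_x: "(\<integral>x. indicator (QT T) (x, t) * Bx (x, t) \<partial>lborel) = 0" for t
  proof (cases "0 < t \<and> t < T")
    case False then show ?thesis by (simp add: indQT)
  next
    case True
    have cBt: "continuous_on {-R..R} (\<lambda>x. Bf (x, t))"
      by (rule continuous_on_compose2[OF cB]) (auto intro!: continuous_intros)
    have cBxt: "continuous_on {-R..R} (\<lambda>x. Bx (x, t))"
      by (rule continuous_on_compose2[OF cBx]) (auto intro!: continuous_intros)
    have "(LINT x:{-R<..<R}|lborel. Bx (x, t)) = Bf (R, t) - Bf (-R, t)"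
      by (rule ftc_Ioo(2)[OF _ cBt _ cBxt]) (use R True dB in auto)
    also have "\<dots> = 0" using van R(2)[of R t] R(2)[of "-R" t] by auto
    finally have z: "(LINT x:{-R<..<R}|lborel. Bx (x, t)) = 0" .
    have "(\<lambda>x. indicator (QT T) (x, t) * Bx (x, t)) = (\<lambda>x. indicator {-R<..<R} x *\<^sub>R Bx (x, t))"
    proof
      fix x
      show "indicator (QT T) (x, t) * Bx (x, t) = indicator {-R<..<R} x *\<^sub>R Bx (x, t)"
      proof (cases "x \<in> {-R<..<R}")
        case True then show ?thesis using \<open>0 < t \<and> t < T\<close> by (simp add: indQT)
      next
        case False
        then have "\<bar>x\<bar> \<ge> R" by auto
        then have "Bx (x, t) = 0" using van R(2) by blast
        then show ?thesis by simp
      qed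
    qed
    then show ?thesis using z by (simp add: set_lebesgue_integral_def)
  qed
  have intBx: "(LINT z:QT T|lborel. Bx z) = 0"
  proof -
    have "(LINT z:QT T|lborel. Bx z) = integral\<^sup>L lborel (\<lambda>z. indicator (QT T) z * Bx z)"
      by (simp add: set_lebesgue_integral_def)
    also have "\<dots> = (\<integral>t. (\<integral>x. indicator (QT T) (x, t) * Bx (x, t) \<partial>lborel) \<partial>lborel)"
      by (rule fub_snd) (use sBx in \<open>simp add: set_integrable_def\<close>)
    also have "\<dots> = 0" by (simp add: inner_x)
    finally show ?thesis .
  qed
  have intC: "(LINT z:QT T|lborel. C z) \<ge> 0"
    unfolding set_lebesgue_integral_def
    by (rule Bochner_Integration.integral_nonneg) (auto simp: QT_def indicator_def intro: Cnn)
  have "(LINT z:QT T|lborel. At z + Bx z + C z) = (LINT z:QT T|lborel. At z) + (LINT z:QT T|lborel. Bx z) + (LINT z:QT T|lborel. C z)"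
    using sAt sBx sC by (simp add: set_integral_add)
  then show "(LINT z:QT T|lborel. At z + Bx z + C z) + (LINT x|lborel. A (x, 0)) \<ge> 0"
    using intAt intBx intC by simp
qed


lemma alg_id:
  fixes w p1 p2 p3 e \<eta>1 \<eta>v \<Phi>v \<phi> \<phi>x \<phi>t :: real
  assumes w: "w > 0" and w2: "w^2 = p1^2 + e^2"
  shows "\<eta>v * \<phi>t + \<Phi>v * (- (p2 * p1)) * \<phi>x + (\<Phi>v - (1 / w) * \<eta>1) * (- (p3 * p1 + p2 * p2)) * \<phi>
    = (\<eta>1 * (p1 * p3 / w) * \<phi> + \<eta>v * \<phi>t)
      + ((- (1 / w^2)) * \<eta>1 * (p1 * p2 / w) * (- (p2 * p1)) * \<phi> + \<Phi>v * ((- (p3 * p1 + p2 * p2)) * \<phi> + (- (p2 * p1)) * \<phi>x))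
      + \<eta>1 * \<phi> * p2^2 * e^2 / w^3"
proof -
  have e2: "e^2 = w^2 - p1^2" using w2 by simp
  show ?thesis unfolding e2 using w by (simp add: field_simps power2_eq_square power3_eq_cube)
qed

lemma fa_deriv: assumes e: "e > 0" and v: "v > e" shows "deriv (f_a e) v = - (1 / v^2)"
proof -
  have "((\<lambda>x. 1 / x) has_real_derivative - (1 / v^2)) (at v)"
    using v e by (auto intro!: derivative_eq_intros simp: power2_eq_square field_simps)
  then have "(f_a e has_real_derivative - (1 / v^2)) (at v)"
    by (rule has_field_derivative_transform_within_open[of _ _ _ "{e<..}"]) (use v in \<open>auto simp: f_a_def\<close>)
  then show ?thesis by (rule DERIV_imp_deriv)
qed

lemma mono_deriv_nonneg:
  fixes f :: "real \<Rightarrow> real"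
  assumes m: "mono f" and d: "(f has_real_derivative D) (at x)"
  shows "D \<ge> 0"
proof (rule ccontr)
  assume "\<not> D \<ge> 0" then have "D < 0" by simp
  from DERIV_neg_dec_left[OF d this] obtain d where "d > 0" "\<And>h. h > 0 \<Longrightarrow> h < d \<Longrightarrow> f x < f (x - h)" by blast
  then have "f x < f (x - d / 2)" by simp
  moreover have "f (x - d / 2) \<le> f x" using m \<open>d > 0\<close> by (simp add: monoD)
  ultimately show False by simp
qed

lemma partials:
  fixes \<phi> \<phi>x \<phi>t :: "real \<times> real \<Rightarrow> real"
  assumes d: "\<And>z. (\<phi> has_derivative (\<lambda>(h,k). \<phi>x z * h + \<phi>t z * k)) (at z)"
  shows "((\<lambda>t. \<phi> (x, t)) has_real_derivative \<phi>t (x, t)) (at t)"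
    "((\<lambda>x. \<phi> (x, t)) has_real_derivative \<phi>x (x, t)) (at x)"
proof -
  have g1: "((\<lambda>t. (x, t)) has_derivative (\<lambda>h. (0, h))) (at t)"
    by (auto intro!: derivative_eq_intros)
  have "((\<lambda>t. \<phi> (x, t)) has_derivative (\<lambda>h. (\<lambda>(h,k). \<phi>x (x,t) * h + \<phi>t (x,t) * k) (0, h))) (at t)"
    using has_derivative_compose[OF g1 d[of "(x,t)"]] by (simp add: o_def)
  then show "((\<lambda>t. \<phi> (x, t)) has_real_derivative \<phi>t (x, t)) (at t)"
    by (rule has_derivative_imp_has_field_derivative) simp
  have g2: "((\<lambda>x. (x, t)) has_derivative (\<lambda>h. (h, 0))) (at x)"
    by (auto intro!: derivative_eq_intros)
  have "((\<lambda>x. \<phi> (x, t)) has_derivative (\<lambda>h. (\<lambda>(h,k). \<phi>x (x,t) * h + \<phi>t (x,t) * k) (h, 0))) (at x)"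
    using has_derivative_compose[OF g2 d[of "(x,t)"]] by (simp add: o_def)
  then show "((\<lambda>x. \<phi> (x, t)) has_real_derivative \<phi>x (x, t)) (at x)"
    by (rule has_derivative_imp_has_field_derivative) simp
qed

lemma vanish_deriv:
  fixes \<phi> \<phi>x \<phi>t :: "real \<times> real \<Rightarrow> real"
  assumes d: "\<And>z. (\<phi> has_derivative (\<lambda>(h,k). \<phi>x z * h + \<phi>t z * k)) (at z)"
    and K: "compact K" and z0: "\<And>z. z \<notin> K \<Longrightarrow> \<phi> z = 0" and z: "z \<notin> K"
  shows "\<phi>x z = 0" "\<phi>t z = 0"
proof -
  have op: "open (- K)" using K by (simp add: compact_imp_closed open_Compl)
  have "((\<lambda>_. 0) has_derivative (\<lambda>_. 0)) (at z)" by simp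
  then have "(\<phi> has_derivative (\<lambda>_. 0)) (at z)"
    by (rule has_derivative_transform_within_open[OF _ op]) (use z z0 in auto)
  then have eq: "(\<lambda>(h,k). \<phi>x z * h + \<phi>t z * k) = (\<lambda>_. (0::real))"
    using has_derivative_unique[OF d[of z]] by blast
  from fun_cong[OF eq, of "(1,0)"] show "\<phi>x z = 0" by simp
  from fun_cong[OF eq, of "(0,1)"] show "\<phi>t z = 0" by simp
qed


context hd
begin

lemma u_dt1: "t > 0 \<Longrightarrow> ((\<lambda>t. u 1 x t) has_real_derivative u 3 x t) (at t)"
  using u_dt[of t 1 x] by (simp add: eval_nat_numeral)

lemma u_dt0: "t > 0 \<Longrightarrow> ((\<lambda>t. u 0 x t) has_real_derivative u 2 x t) (at t)"
  using u_dt[of t 0 x] by (simp add: eval_nat_numeral)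

lemma u_dx': "((\<lambda>x. u 1 x t) has_real_derivative u 2 x t) (at x)"
  "((\<lambda>x. u 2 x t) has_real_derivative u 3 x t) (at x)"
  "((\<lambda>x. u 0 x t) has_real_derivative u 1 x t) (at x)"
  using u_dx[of 1 t x] u_dx[of 2 t x] u_dx[of 0 t x] by (simp_all add: eval_nat_numeral)

lemma sqrt_gen_deriv:
  fixes g :: "real \<Rightarrow> real"
  assumes e: "e > 0" and d: "(g has_real_derivative g') (at y)"
  shows "((\<lambda>y. sqrt ((g y)^2 + e^2)) has_real_derivative g y * g' / sqrt ((g y)^2 + e^2)) (at y)"
proof -
  have pos: "(g y)^2 + e^2 > 0" using e by (simp add: add_nonneg_pos)
  have d2: "((\<lambda>y. (g y)^2 + e^2) has_real_derivative 2 * g y * g') (at y)"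
    using d by (auto intro!: derivative_eq_intros)
  have "((\<lambda>y. sqrt ((g y)^2 + e^2)) has_real_derivative inverse (sqrt ((g y)^2 + e^2)) / 2 * (2 * g y * g')) (at y)"
    by (rule DERIV_chain2[OF DERIV_real_sqrt[OF pos] d2])
  moreover have "inverse (sqrt ((g y)^2 + e^2)) / 2 * (2 * g y * g') = g y * g' / sqrt ((g y)^2 + e^2)"
    by (simp add: field_simps)
  ultimately show ?thesis by simp
qed

lemma u_cont': "continuous_on UNIV (\<lambda>z. u n (fst z) (snd z))" by (rule u_cont)

end

context hd2
begin

lemma rhx: "t \<ge> 0 \<Longrightarrow> rho_hat_x rho x t = u 1 x t"
proof -
  assume t: "t \<ge> 0"
  have "(\<lambda>y. rho_hat rho y t) = (\<lambda>y. u 0 y t)" using rhohat_eq[OF t] by auto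
  then show ?thesis unfolding rho_hat_x_def using DERIV_imp_deriv[OF u_dx'(3)] by simp
qed

lemma rht: "t > 0 \<Longrightarrow> rho_hat_t rho x t = u 2 x t"
proof -
  assume t: "t > 0"
  have "((\<lambda>s. rho_hat rho x s) has_real_derivative u 2 x t) (at t)"
    by (rule has_field_derivative_transform_within_open[OF u_dt0[OF t], of "{0<..}"]) (use t rhohat_eq in auto)
  then show ?thesis unfolding rho_hat_t_def by (rule DERIV_imp_deriv)
qed

lemma ghat: "t > 0 \<Longrightarrow> g_hat rho (x, t) = - (u 2 x t * u 1 x t)"
  unfolding g_hat_def using rht[of t x] rhx[of t x] by simp

lemma ghx: "t > 0 \<Longrightarrow> deriv (\<lambda>y. g_hat rho (y, t)) x = - (u 3 x t * u 1 x t + u 2 x t * u 2 x t)"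
proof -
  assume t: "t > 0"
  have "(\<lambda>y. g_hat rho (y, t)) = (\<lambda>y. - (u 2 y t * u 1 y t))" using ghat[OF t] by auto
  moreover have "((\<lambda>y. - (u 2 y t * u 1 y t)) has_real_derivative - (u 3 x t * u 1 x t + u 2 x t * u 2 x t)) (at x)"
    using DERIV_minus[OF DERIV_mult[OF u_dx'(2) u_dx'(1)]] by (simp add: algebra_simps)
  ultimately show ?thesis by (simp add: DERIV_imp_deriv)
qed

end

lemma final_step:
  fixes G Fo :: "'a \<Rightarrow> real" and G0 F0o :: "'b \<Rightarrow> real"
  assumes "set_integrable M S G" "integrable M' G0" "(LINT z:S|M. G z) + (LINT x|M'. G0 x) \<ge> 0" "S \<in> sets M"
   "\<And>z. z \<in> S \<Longrightarrow> Fo z = G z" "\<And>x. F0o x = G0 x"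
  shows "set_integrable M S Fo \<and> integrable M' F0o \<and> (LINT z:S|M. Fo z) + (LINT x|M'. F0o x) \<ge> 0"
proof -
  have "set_integrable M S Fo = set_integrable M S G" by (rule set_integrable_cong) (use assms in auto)
  moreover have "(LINT z:S|M. Fo z) = (LINT z:S|M. G z)" by (rule set_lebesgue_integral_cong) (use assms in auto)
  moreover have "F0o = G0" using assms by auto
  ultimately show ?thesis using assms by simp
qed

context hd2
begin

lemma core:
  fixes T \<epsilon> :: real and \<phi> \<phi>x \<phi>t :: "real \<times> real \<Rightarrow> real" and \<eta> \<eta>' \<Phi> :: "real \<Rightarrow> real"
  assumes T: "T > 0" and eps: "\<epsilon> > 0" and tf: "test_fun T \<phi> \<phi>x \<phi>t"
    and d\<eta>: "\<forall>u. (\<eta> has_real_derivative \<eta>' u) (at u)" and c\<eta>': "continuous_on UNIV \<eta>'" and m\<eta>: "mono \<eta>"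
    and d\<Phi>: "\<forall>u. (\<Phi> has_real_derivative deriv (f_a \<epsilon>) u * \<eta>' u) (at u)"
  shows "set_integrable lborel (QT T) (\<lambda>z. \<eta> (G_eps \<epsilon> (rho_hat_x rho (fst z) (snd z))) * \<phi>t z
              + \<Phi> (G_eps \<epsilon> (rho_hat_x rho (fst z) (snd z))) * g_hat rho z * \<phi>x z
              + (\<Phi> (G_eps \<epsilon> (rho_hat_x rho (fst z) (snd z))) - f_a \<epsilon> (G_eps \<epsilon> (rho_hat_x rho (fst z) (snd z))) * \<eta>' (G_eps \<epsilon> (rho_hat_x rho (fst z) (snd z))))
                * deriv (\<lambda>y. g_hat rho (y, snd z)) (fst z) * \<phi> z) \<and>
     integrable lborel (\<lambda>x. \<eta> (G_eps \<epsilon> (rho_hat_x rho x 0)) * \<phi> (x, 0)) \<and>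
     (LINT z:QT T|lborel. \<eta> (G_eps \<epsilon> (rho_hat_x rho (fst z) (snd z))) * \<phi>t z
              + \<Phi> (G_eps \<epsilon> (rho_hat_x rho (fst z) (snd z))) * g_hat rho z * \<phi>x z
              + (\<Phi> (G_eps \<epsilon> (rho_hat_x rho (fst z) (snd z))) - f_a \<epsilon> (G_eps \<epsilon> (rho_hat_x rho (fst z) (snd z))) * \<eta>' (G_eps \<epsilon> (rho_hat_x rho (fst z) (snd z))))
                * deriv (\<lambda>y. g_hat rho (y, snd z)) (fst z) * \<phi> z)
     + (LINT x|lborel. \<eta> (G_eps \<epsilon> (rho_hat_x rho x 0)) * \<phi> (x, 0)) \<ge> 0"
proof -
  from tf have d\<phi>: "\<And>z. (\<phi> has_derivative (\<lambda>(h,k). \<phi>x z * h + \<phi>t z * k)) (at z)"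
    and c\<phi>x: "continuous_on UNIV \<phi>x" and c\<phi>t: "continuous_on UNIV \<phi>t"
    and \<phi>nn: "\<And>x t. t \<ge> 0 \<Longrightarrow> \<phi> (x,t) \<ge> 0"
    and "\<exists>K. compact K \<and> K \<subseteq> {z. snd z < T} \<and> (\<forall>z. z \<notin> K \<longrightarrow> \<phi> z = 0)"
    unfolding test_fun_def by blast+
  then obtain K where K: "compact K" "K \<subseteq> {z. snd z < T}" and \<phi>0: "\<And>z. z \<notin> K \<Longrightarrow> \<phi> z = 0" by blast
  have \<phi>x0: "\<phi>x z = 0" and \<phi>t0: "\<phi>t z = 0" if "z \<notin> K" for z
    using vanish_deriv[OF d\<phi> K(1) \<phi>0 that] by auto
  have c\<phi>: "continuous_on UNIV \<phi>"
    using d\<phi> by (meson has_derivative_continuous continuous_at_imp_continuous_on)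
  have c\<eta>: "continuous_on UNIV \<eta>"
    using d\<eta> by (meson DERIV_continuous continuous_at_imp_continuous_on)
  have c\<Phi>: "continuous_on UNIV \<Phi>"
    using d\<Phi> by (meson DERIV_continuous continuous_at_imp_continuous_on)
  have \<eta>'nn: "\<eta>' v \<ge> 0" for v using mono_deriv_nonneg[OF m\<eta>] d\<eta> by blast
  define p1 where "p1 z = u 1 (fst z) (snd z)" for z
  define p2 where "p2 z = u 2 (fst z) (snd z)" for z
  define p3 where "p3 z = u 3 (fst z) (snd z)" for z
  define w where "w z = sqrt ((p1 z)^2 + \<epsilon>^2)" for z
  have cp1: "continuous_on UNIV p1" unfolding p1_def[abs_def] by (rule u_cont')
  have cp2: "continuous_on UNIV p2" unfolding p2_def[abs_def] by (rule u_cont')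
  have cp3: "continuous_on UNIV p3" unfolding p3_def[abs_def] by (rule u_cont')
  have cw: "continuous_on UNIV w" unfolding w_def[abs_def] by (intro continuous_intros cp1)
  have wpos: "w z > 0" for z using eps unfolding w_def by (simp add: add_nonneg_pos)
  have wne: "w z \<noteq> 0" for z using wpos[of z] by simp
  have w2: "(w z)^2 = (p1 z)^2 + \<epsilon>^2" for z unfolding w_def by (simp add: add_nonneg_nonneg)
  have wge: "w z \<ge> \<epsilon>" for z
  proof -
    have "sqrt (\<epsilon>^2) \<le> w z" unfolding w_def by (rule real_sqrt_le_mono) simp
    then show ?thesis using eps by simp
  qed
  have c\<eta>w: "continuous_on UNIV (\<lambda>z. \<eta> (w z))" by (rule continuous_on_compose2[OF c\<eta> cw]) auto
  have c\<eta>'w: "continuous_on UNIV (\<lambda>z. \<eta>' (w z))" by (rule continuous_on_compose2[OF c\<eta>' cw]) auto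
  have c\<Phi>w: "continuous_on UNIV (\<lambda>z. \<Phi> (w z))" by (rule continuous_on_compose2[OF c\<Phi> cw]) auto
  define A where "A z = \<eta> (w z) * \<phi> z" for z
  define At where "At z = \<eta>' (w z) * (p1 z * p3 z / w z) * \<phi> z + \<eta> (w z) * \<phi>t z" for z
  define Bf where "Bf z = \<Phi> (w z) * (- (p2 z * p1 z)) * \<phi> z" for z
  define Bx where "Bx z = (- (1 / (w z)^2)) * \<eta>' (w z) * (p1 z * p2 z / w z) * (- (p2 z * p1 z)) * \<phi> z
      + \<Phi> (w z) * ((- (p3 z * p1 z + p2 z * p2 z)) * \<phi> z + (- (p2 z * p1 z)) * \<phi>x z)" for z
  define C where "C z = \<eta>' (w z) * \<phi> z * (p2 z)^2 * \<epsilon>^2 / (w z)^3" for z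
  have cA: "continuous_on UNIV A" unfolding A_def[abs_def] by (intro continuous_intros c\<eta>w c\<phi>)
  have cAt: "continuous_on UNIV At" unfolding At_def[abs_def]
    by (intro continuous_intros c\<eta>w c\<eta>'w c\<phi> c\<phi>t cp1 cp3 cw) (use wne in auto)
  have cB: "continuous_on UNIV Bf" unfolding Bf_def[abs_def] by (intro continuous_intros c\<Phi>w c\<phi> cp1 cp2)
  have cBx: "continuous_on UNIV Bx" unfolding Bx_def[abs_def]
    by (intro continuous_intros c\<Phi>w c\<eta>'w c\<phi> c\<phi>x cp1 cp2 cp3 cw) (use wne in auto)
  have cC: "continuous_on UNIV C" unfolding C_def[abs_def]
    by (intro continuous_intros c\<eta>'w c\<phi> cp2 cw) (use wne in auto)
  have van: "A z = 0 \<and> At z = 0 \<and> Bf z = 0 \<and> Bx z = 0 \<and> C z = 0" if "z \<notin> K" for z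
    using \<phi>0[OF that] \<phi>x0[OF that] \<phi>t0[OF that] by (simp add: A_def At_def Bf_def Bx_def C_def)
  have dA: "((\<lambda>t. A (x, t)) has_real_derivative At (x, t)) (at t)" if t: "0 < t" "t < T" for x t
  proof -
    have dw: "((\<lambda>t. w (x, t)) has_real_derivative u 1 x t * u 3 x t / w (x, t)) (at t)"
      unfolding w_def p1_def using sqrt_gen_deriv[OF eps u_dt1[OF t(1)]] by simp
    have d1: "((\<lambda>t. \<eta> (w (x, t))) has_real_derivative \<eta>' (w (x, t)) * (u 1 x t * u 3 x t / w (x, t))) (at t)"
      by (rule DERIV_chain2[OF d\<eta>[rule_format] dw])
    have "((\<lambda>t. \<eta> (w (x, t)) * \<phi> (x, t)) has_real_derivative
        \<eta>' (w (x, t)) * (u 1 x t * u 3 x t / w (x, t)) * \<phi> (x, t) + \<phi>t (x, t) * \<eta> (w (x, t))) (at t)"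
      by (rule DERIV_mult[OF d1 partials(1)[OF d\<phi>]])
    then show ?thesis unfolding A_def At_def p1_def p3_def by (simp add: algebra_simps)
  qed
  have dB: "((\<lambda>x. Bf (x, t)) has_real_derivative Bx (x, t)) (at x)" if t: "0 < t" "t < T" for x t
  proof -
    have dw: "((\<lambda>x. w (x, t)) has_real_derivative u 1 x t * u 2 x t / w (x, t)) (at x)"
      unfolding w_def p1_def using sqrt_gen_deriv[OF eps u_dx'(1)] by simp
    have d1: "((\<lambda>x. \<Phi> (w (x, t))) has_real_derivative (deriv (f_a \<epsilon>) (w (x, t)) * \<eta>' (w (x, t))) * (u 1 x t * u 2 x t / w (x, t))) (at x)"
      by (rule DERIV_chain2[OF d\<Phi>[rule_format] dw])
    have key: "(deriv (f_a \<epsilon>) (w (x, t)) * \<eta>' (w (x, t))) * (u 1 x t * u 2 x t / w (x, t))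
        = (- (1 / (w (x, t))^2)) * \<eta>' (w (x, t)) * (u 1 x t * u 2 x t / w (x, t))"
    proof (cases "u 1 x t = 0")
      case True then show ?thesis by simp
    next
      case False
      then have "(p1 (x,t))^2 > 0" by (simp add: p1_def)
      then have "(w (x, t))^2 > \<epsilon>^2" using w2[of "(x,t)"] by simp
      then have "w (x, t) > \<epsilon>" using wpos[of "(x,t)"] eps by (meson power_less_imp_less_base less_le)
      then show ?thesis using fa_deriv[OF eps] by simp
    qed
    have d2: "((\<lambda>x. - (u 2 x t * u 1 x t)) has_real_derivative - (u 3 x t * u 1 x t + u 2 x t * u 2 x t)) (at x)"
      using DERIV_minus[OF DERIV_mult[OF u_dx'(2) u_dx'(1)]] by (simp add: algebra_simps)
    have "((\<lambda>x. \<Phi> (w (x, t)) * (- (u 2 x t * u 1 x t)) * \<phi> (x, t)) has_real_derivative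
        ((deriv (f_a \<epsilon>) (w (x, t)) * \<eta>' (w (x, t))) * (u 1 x t * u 2 x t / w (x, t)) * (- (u 2 x t * u 1 x t))
          + (- (u 3 x t * u 1 x t + u 2 x t * u 2 x t)) * \<Phi> (w (x, t))) * \<phi> (x, t)
        + \<phi>x (x, t) * (\<Phi> (w (x, t)) * (- (u 2 x t * u 1 x t)))) (at x)"
      by (rule DERIV_mult[OF DERIV_mult[OF d1 d2] partials(2)[OF d\<phi>]])
    then show ?thesis unfolding Bf_def Bx_def p1_def p2_def p3_def key by (simp add: algebra_simps)
  qed
  have Cnn: "0 \<le> C (x, t)" if "0 < t" "t < T" for x t
    unfolding C_def using \<eta>'nn \<phi>nn[of t x] that wpos[of "(x,t)"]
    by (intro divide_nonneg_pos mult_nonneg_nonneg) auto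
  note mi = main_ineq[OF T K cA cAt cB cBx cC van dA dB Cnn]
  show ?thesis
  proof (rule final_step[OF mi(1) mi(2) mi(3) QT_sets])
    fix z assume z: "z \<in> QT T"
    obtain x t where zxt: "z = (x, t)" by fastforce
    have t: "t > 0" using z by (simp add: zxt QT_def)
    have v: "G_eps \<epsilon> (rho_hat_x rho (fst z) (snd z)) = w z"
      using rhx[of t x] t by (simp add: zxt G_eps_def w_def p1_def)
    have f: "f_a \<epsilon> (w z) = 1 / w z" using wge[of z] by (simp add: f_a_def)
    have g: "g_hat rho z = - (p2 z * p1 z)" using ghat[OF t, of x] by (simp add: zxt p1_def p2_def)
    have gx: "deriv (\<lambda>y. g_hat rho (y, snd z)) (fst z) = - (p3 z * p1 z + p2 z * p2 z)"
      using ghx[OF t, of x] by (simp add: zxt p1_def p2_def p3_def)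
    show "\<eta> (G_eps \<epsilon> (rho_hat_x rho (fst z) (snd z))) * \<phi>t z
              + \<Phi> (G_eps \<epsilon> (rho_hat_x rho (fst z) (snd z))) * g_hat rho z * \<phi>x z
              + (\<Phi> (G_eps \<epsilon> (rho_hat_x rho (fst z) (snd z))) - f_a \<epsilon> (G_eps \<epsilon> (rho_hat_x rho (fst z) (snd z))) * \<eta>' (G_eps \<epsilon> (rho_hat_x rho (fst z) (snd z))))
                * deriv (\<lambda>y. g_hat rho (y, snd z)) (fst z) * \<phi> z = At z + Bx z + C z"
      unfolding v f g gx At_def Bx_def C_def
      by (rule alg_id[OF wpos w2])
  next
    fix x
    show "\<eta> (G_eps \<epsilon> (rho_hat_x rho x 0)) * \<phi> (x, 0) = A (x, 0)"
      using rhx[of 0 x] by (simp add: A_def G_eps_def w_def p1_def)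
  qed
qed

end

theorem lemma5p3:
  fixes T \<epsilon> :: real and \<rho>0 :: "real \<Rightarrow> real" and \<rho> :: "real \<Rightarrow> real \<Rightarrow> real"
  assumes T: "T > 0" and eps: "\<epsilon> > 0"
    and rho0_smooth: "\<forall>n x. (deriv ^^ n) \<rho>0 differentiable (at x)"
    and rho0_supp: "\<exists>a b. 0 < a \<and> a \<le> b \<and> b < 1 \<and> (\<forall>x. x < a \<or> b < x \<longrightarrow> \<rho>0 x = 0)"
    and rho_cont: "continuous_on ({0..1} \<times> {0..}) (\<lambda>(x,t). \<rho> x t)"
    and rho_heat: "\<forall>x t. 0 < x \<and> x < 1 \<and> 0 < t \<longrightarrow>
        (\<forall>y\<in>{0<..<1}. (\<lambda>z. \<rho> z t) differentiable (at y)) \<and>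
        (\<exists>D. (deriv (\<lambda>z. \<rho> z t) has_real_derivative D) (at x) \<and>
             ((\<lambda>s. \<rho> x s) has_real_derivative D) (at t))"
    and rho_bc: "\<forall>t>0. \<rho> 0 t = 0 \<and> \<rho> 1 t = 0"
    and rho_init: "\<forall>x\<in>{0..1}. \<rho> x 0 = \<rho>0 x"
  shows "entropy_subsol T (g_hat \<rho>) (f_a \<epsilon>)
           (\<lambda>z. G_eps \<epsilon> (rho_hat_x \<rho> (fst z) (snd z)))
           (\<lambda>x. G_eps \<epsilon> (rho_hat_x \<rho> x 0))"
proof -
  obtain a b where ab: "0 < a" "a \<le> b" "b < 1" "\<forall>x. x < a \<or> b < x \<longrightarrow> \<rho>0 x = 0"
    using rho0_supp by blast
  interpret H: hd2 \<rho>0 a b \<rho>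
    by unfold_locales (fact rho0_smooth ab rho_cont rho_heat rho_bc rho_init)+
  define w where "w z = sqrt ((H.u 1 (fst z) (snd z))^2 + \<epsilon>^2)" for z
  have cw: "continuous_on UNIV w" unfolding w_def[abs_def] by (intro continuous_intros H.u_cont')
  have v_eq: "G_eps \<epsilon> (rho_hat_x \<rho> (fst z) (snd z)) = w z" if "z \<in> QT T" for z
  proof -
    have "snd z \<ge> 0" using that by (auto simp: QT_def)
    then show ?thesis using H.rhx[of "snd z" "fst z"] by (simp add: G_eps_def w_def)
  qed
  show ?thesis
    unfolding entropy_subsol_def
  proof (intro conjI allI impI)
    have "(\<lambda>z. indicator (QT T) z *\<^sub>R G_eps \<epsilon> (rho_hat_x \<rho> (fst z) (snd z))) = (\<lambda>z. indicator (QT T) z *\<^sub>R w z)"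
      using v_eq by (auto simp: fun_eq_iff indicator_def)
    moreover have "(\<lambda>z. indicator (QT T) z *\<^sub>R w z) \<in> borel_measurable lborel"
    proof -
      have [measurable]: "w \<in> borel_measurable borel" by (rule borel_measurable_continuous_onI[OF cw])
      have [measurable]: "QT T \<in> sets borel" using QT_sets by simp
      show ?thesis by measurable
    qed
    ultimately show "set_borel_measurable lborel (QT T) (\<lambda>z. G_eps \<epsilon> (rho_hat_x \<rho> (fst z) (snd z)))"
      unfolding set_borel_measurable_def by simp
  next
    show "\<exists>C. AE z in lborel. z \<in> QT T \<longrightarrow> \<bar>G_eps \<epsilon> (rho_hat_x \<rho> (fst z) (snd z))\<bar> \<le> C"
    proof (intro exI AE_I2 impI)
      fix z :: "real \<times> real" assume z: "z \<in> QT T"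
      define p where "p = H.u 1 (fst z) (snd z)"
      have "w z \<le> sqrt ((\<bar>p\<bar> + \<epsilon>)^2)" unfolding w_def p_def[symmetric]
        by (rule real_sqrt_le_mono) (use eps in \<open>simp add: power2_eq_square algebra_simps\<close>)
      also have "\<dots> = \<bar>p\<bar> + \<epsilon>" using eps by simp
      also have "\<dots> \<le> H.Bd 1 + \<epsilon>" using H.u_bound[of 1 "fst z" "snd z"] by (simp add: p_def)
      finally show "\<bar>G_eps \<epsilon> (rho_hat_x \<rho> (fst z) (snd z))\<bar> \<le> H.Bd 1 + \<epsilon>"
        using v_eq[OF z] by (simp add: w_def)
    qed
  next
    fix \<phi> \<phi>x \<phi>t :: "real \<times> real \<Rightarrow> real" and \<eta> \<eta>' \<Phi> :: "real \<Rightarrow> real"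
    assume as: "test_fun T \<phi> \<phi>x \<phi>t \<and> (\<forall>u. (\<eta> has_real_derivative \<eta>' u) (at u)) \<and> continuous_on UNIV \<eta>' \<and>
        mono \<eta> \<and> convex_on UNIV \<eta> \<and> (\<forall>u. (\<Phi> has_real_derivative deriv (f_a \<epsilon>) u * \<eta>' u) (at u))"
    then have tf: "test_fun T \<phi> \<phi>x \<phi>t" and d\<eta>: "\<forall>u. (\<eta> has_real_derivative \<eta>' u) (at u)"
      and c\<eta>': "continuous_on UNIV \<eta>'" and m\<eta>: "mono \<eta>"
      and d\<Phi>: "\<forall>u. (\<Phi> has_real_derivative deriv (f_a \<epsilon>) u * \<eta>' u) (at u)" by auto
    note c = H.core[OF T eps tf d\<eta> c\<eta>' m\<eta> d\<Phi>]
    show "let h = \<lambda>u. \<Phi> u - f_a \<epsilon> u * \<eta>' u;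
             gx = \<lambda>z. deriv (\<lambda>y. g_hat \<rho> (y, snd z)) (fst z);
             F = \<lambda>z. \<eta> (G_eps \<epsilon> (rho_hat_x \<rho> (fst z) (snd z))) * \<phi>t z +
                     \<Phi> (G_eps \<epsilon> (rho_hat_x \<rho> (fst z) (snd z))) * g_hat \<rho> z * \<phi>x z +
                     h (G_eps \<epsilon> (rho_hat_x \<rho> (fst z) (snd z))) * gx z * \<phi> z;
             F0 = \<lambda>x. \<eta> (G_eps \<epsilon> (rho_hat_x \<rho> x 0)) * \<phi> (x, 0)
         in set_integrable lborel (QT T) F \<and> integrable lborel F0 \<and>
            0 \<le> (LINT z:QT T|lborel. F z) + (LINT x|lborel. F0 x)"
      unfolding Let_def using c by simp
  qed
qed


end
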